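(* Let $A$ be a process with regulated trajectories and of bounded variation. Then for every $t\geq0$, $$A_t^2\leq A_0^2+\int_{]0,t]}(A_s+A_{s^+})\,dA^r_s+2\sum_{0\leq s<t}A_{s^+}\Delta^+A_s-\sum_{0<s\leq t}\Delta^+A_s\,\Delta^-A_s.$$
   Context: Regulated trajectory: path with left limits $A_{t^-}$ at each $t>0$ and right limits $A_{t^+}$ at each $t\geq0$. $\Delta^+A_t=A_{t^+}-A_t$, $\Delta^-A_t=A_t-A_{t^-}$. A bounded variation process decomposes as $A_t=A^c_t+\sum_{0<s\leq t}\Delta^-A_s+\sum_{0\leq s<t}\Delta^+A_s$ with $A^c$ continuous; $A^r_t=A^c_t+\sum_{0<s\leq t}\Delta^-A_s$ is its right-continuous part, and the integral is a Stieltjes integral. *)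

theory Defs
  imports "HOL-Analysis.Analysis"
begin

definition partition_sums :: "(real \<Rightarrow> real) \<Rightarrow> real \<Rightarrow> real \<Rightarrow> real set" where
  "partition_sums f a b =
     {(\<Sum>i<length xs - 1. \<bar>f (xs ! Suc i) - f (xs ! i)\<bar>) | xs.
        sorted xs \<and> xs \<noteq> [] \<and> hd xs = a \<and> last xs = b}"

definition bounded_variation_on :: "(real \<Rightarrow> real) \<Rightarrow> real \<Rightarrow> real \<Rightarrow> bool" where
  "bounded_variation_on f a b \<longleftrightarrow> a \<le> b \<and> bdd_above (partition_sums f a b)"

definition variation :: "(real \<Rightarrow> real) \<Rightarrow> real \<Rightarrow> real \<Rightarrow> real" where
  "variation f a b = Sup (partition_sums f a b)"

definition bv_path :: "(real \<Rightarrow> real) \<Rightarrow> bool" where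
  "bv_path f \<longleftrightarrow> (\<forall>t\<ge>0. bounded_variation_on f 0 t)"

definition regulated_path :: "(real \<Rightarrow> real) \<Rightarrow> bool" where
  "regulated_path f \<longleftrightarrow> (\<forall>t>0. \<exists>l. (f \<longlongrightarrow> l) (at_left t)) \<and>
                        (\<forall>t\<ge>0. \<exists>l. (f \<longlongrightarrow> l) (at_right t))"

definition right_lim :: "(real \<Rightarrow> real) \<Rightarrow> real \<Rightarrow> real" where
  "right_lim f s = Lim (at_right s) f"

definition left_lim :: "(real \<Rightarrow> real) \<Rightarrow> real \<Rightarrow> real" where
  "left_lim f s = Lim (at_left s) f"

text \<open>Right-continuous part A^r_t = A^c_t + sum_{0<s<=t} Delta^- A_s = A_t - sum_{0<=s<t} Delta^+ A_s.\<close>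
definition right_cont_part :: "(real \<Rightarrow> real) \<Rightarrow> real \<Rightarrow> real" where
  "right_cont_part f t = f t - infsum (\<lambda>s. right_lim f s - f s) {0..<t}"

text \<open>Lebesgue-Stieltjes integral over ]a,b] (with 0 <= a) of h against a right-continuous
  function g of locally bounded variation on [0,infinity), via the Jordan decomposition
  g - g 0 = V - W on [0,infinity), V the variation function of g on [0,s], both V and W
  extended by 0 to negative reals (so they are increasing and right-continuous on the reals).\<close>
definition stieltjes_Ioc :: "(real \<Rightarrow> real) \<Rightarrow> (real \<Rightarrow> real) \<Rightarrow> real \<Rightarrow> real \<Rightarrow> real" where
  "stieltjes_Ioc g h a b =
     (let V = (\<lambda>s. if s \<le> 0 then 0 else variation g 0 s);
          W = (\<lambda>s. if s \<le> 0 then 0 else variation g 0 s - (g s - g 0))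
      in (\<integral>x\<in>{a<..b}. h x \<partial>interval_measure V) - (\<integral>x\<in>{a<..b}. h x \<partial>interval_measure W))"

end

theory Submission
  imports Defs
begin

fun psum :: "(real \<Rightarrow> real) \<Rightarrow> real list \<Rightarrow> real" where
  "psum f (x # y # zs) = \<bar>f y - f x\<bar> + psum f (y # zs)"
| "psum f _ = 0"

lemma psum_nonneg: "psum f xs \<ge> 0"
  by (induction f xs rule: psum.induct) auto

lemma psum_eq: "(\<Sum>i<length xs - 1. \<bar>f (xs ! Suc i) - f (xs ! i)\<bar>) = psum f xs"
proof (induction f xs rule: psum.induct)
  case (1 f x y zs)
  have "(\<Sum>i<length (x # y # zs) - 1. \<bar>f ((x # y # zs) ! Suc i) - f ((x # y # zs) ! i)\<bar>)
     = (\<Sum>i<Suc (length (y # zs) - 1). \<bar>f ((x # y # zs) ! Suc i) - f ((x # y # zs) ! i)\<bar>)"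
    by simp
  also have "\<dots> = \<bar>f y - f x\<bar> + (\<Sum>i<length (y # zs) - 1. \<bar>f ((y # zs) ! Suc i) - f ((y # zs) ! i)\<bar>)"
    by (subst sum.lessThan_Suc_shift) simp
  finally show ?case using 1 by simp
qed auto

lemma partition_sums_eq:
  "partition_sums f a b = {psum f xs | xs. sorted xs \<and> xs \<noteq> [] \<and> hd xs = a \<and> last xs = b}"
  unfolding partition_sums_def psum_eq ..

lemma psum_append:
  "xs \<noteq> [] \<Longrightarrow> ys \<noteq> [] \<Longrightarrow> last xs = hd ys \<Longrightarrow> psum f (xs @ tl ys) = psum f xs + psum f ys"
proof (induction xs rule: induct_list012)
  case (3 x y zs)
  then show ?case by simp
next
  case 1
  then show ?case by simp
next
  case (2 v)
  then show ?case by (cases ys; cases "tl ys") auto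
qed

lemma sorted_le_last: "sorted xs \<Longrightarrow> x \<in> set xs \<Longrightarrow> x \<le> last xs"
  by (induction xs) (auto simp: last_in_set)

lemma sorted_hd_le: "sorted xs \<Longrightarrow> x \<in> set xs \<Longrightarrow> hd xs \<le> x"
  by (cases xs) auto

lemma psum_split:
  assumes "sorted xs" "xs \<noteq> []" "hd xs \<le> b" "b \<le> last xs"
  shows "\<exists>ys zs. sorted ys \<and> ys \<noteq> [] \<and> hd ys = hd xs \<and> last ys = b \<and>
     sorted zs \<and> zs \<noteq> [] \<and> hd zs = b \<and> last zs = last xs \<and> psum f xs \<le> psum f ys + psum f zs"
  using assms
proof (induction xs rule: induct_list012)
  case (3 x y rest)
  show ?case
  proof (cases "b \<le> y")
    case True
    have "\<bar>f y - f x\<bar> \<le> \<bar>f b - f x\<bar> + \<bar>f y - f b\<bar>" by linarith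
    then have i: "psum f (x # y # rest) \<le> psum f [x, b] + psum f (b # y # rest)" by simp
    have xb: "x \<le> b" using 3(5) by simp
    have "sorted (y # rest)" using 3(3) by simp
    then have s2: "sorted (b # y # rest)" using True by (subst sorted2) blast
    show ?thesis using i xb s2
      by (intro exI[of _ "[x, b]"] exI[of _ "b # y # rest"]) simp
  next
    case False
    have pr: "sorted (y # rest)" "y # rest \<noteq> []" "hd (y # rest) \<le> b" "b \<le> last (y # rest)"
      using 3(3-6) False by (simp_all add: sorted2_simps)
    obtain ys zs where h: "sorted ys" "ys \<noteq> []" "hd ys = y" "last ys = b"
     "sorted zs" "zs \<noteq> []" "hd zs = b" "last zs = last (y # rest)" "psum f (y # rest) \<le> psum f ys + psum f zs"
      using 3(2)[OF pr] unfolding list.sel(1) by blast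
    obtain ys' where ys': "ys = y # ys'" using h(2,3) by (cases ys) auto
    have "x \<le> y" using 3(3) by simp
    then have s1: "sorted (x # ys)" using h(1) ys' by auto
    have "psum f (x # y # rest) \<le> psum f (x # ys) + psum f zs" using h(9) ys' by simp
    then show ?thesis using s1 h ys'
      by (intro exI[of _ "x # ys"] exI[of _ zs]) simp
  qed
next
  case 1
  then show ?case by simp
next
  case (2 v)
  then have vb: "v = b" by simp
  show ?case by (rule exI[of _ "[b]"], rule exI[of _ "[b]"]) (use vb in simp)
qed

lemma psum_tele:
  assumes "sorted xs" "xs \<noteq> []" "set xs \<subseteq> {lo..hi}"
    "\<And>x y. lo \<le> x \<Longrightarrow> x \<le> y \<Longrightarrow> y \<le> hi \<Longrightarrow> \<bar>f y - f x\<bar> \<le> \<psi> y - \<psi> x"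
  shows "psum f xs \<le> \<psi> (last xs) - \<psi> (hd xs)"
  using assms(1-3)
proof (induction xs rule: induct_list012)
  case (3 x y zs)
  have "\<bar>f y - f x\<bar> \<le> \<psi> y - \<psi> x" using 3(3,5) by (intro assms(4)) auto
  then show ?case using 3 by auto
qed auto

lemma psum_first:
  assumes "sorted (s # rest)" "rest \<noteq> []" "s < last rest"
  shows "\<exists>y zs. s < y \<and> sorted zs \<and> zs \<noteq> [] \<and> hd zs = y \<and> last zs = last rest \<and>
     psum f (s # rest) = \<bar>f y - f s\<bar> + psum f zs"
  using assms
proof (induction rest)
  case Nil
  then show ?case by simp
next
  case (Cons x rest)
  show ?case
  proof (cases "x = s")
    case True
    then have "rest \<noteq> []" using Cons by auto
    then have "\<exists>y zs. s < y \<and> sorted zs \<and> zs \<noteq> [] \<and> hd zs = y \<and> last zs = last rest \<and>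
       psum f (s # rest) = \<bar>f y - f s\<bar> + psum f zs"
      using Cons True by (intro Cons.IH) auto
    moreover obtain r rr where "rest = r # rr" using \<open>rest \<noteq> []\<close> by (cases rest) auto
    ultimately show ?thesis using True by auto
  next
    case False
    then have "s < x" using Cons(2) by auto
    then show ?thesis using Cons(2)
      by (intro exI[of _ x] exI[of _ "x # rest"]) auto
  qed
qed

lemma ps_nonempty: "a \<le> b \<Longrightarrow> \<bar>f b - f a\<bar> \<in> partition_sums f a b"
  unfolding partition_sums_eq by (rule CollectI, rule exI[of _ "[a,b]"]) auto

lemma bv_ge:
  assumes "bounded_variation_on f a b"
  shows "\<bar>f b - f a\<bar> \<le> variation f a b"
  using assms unfolding bounded_variation_on_def variation_def
  by (auto intro: cSup_upper ps_nonempty)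

lemma bv_nonneg:
  assumes "bounded_variation_on f a b"
  shows "0 \<le> variation f a b"
  using bv_ge[OF assms] by linarith

lemma bv_psum_le:
  assumes "bounded_variation_on f a b" "sorted xs" "xs \<noteq> []" "hd xs = a" "last xs = b"
  shows "psum f xs \<le> variation f a b"
  using assms unfolding bounded_variation_on_def variation_def partition_sums_eq
  by (intro cSup_upper) auto

lemma bv_sup_le:
  assumes "a \<le> b" "\<And>xs. sorted xs \<Longrightarrow> xs \<noteq> [] \<Longrightarrow> hd xs = a \<Longrightarrow> last xs = b \<Longrightarrow> psum f xs \<le> C"
  shows "bounded_variation_on f a b" "variation f a b \<le> C"
proof -
  show "bounded_variation_on f a b"
    unfolding bounded_variation_on_def partition_sums_eq bdd_above_def using assms by blast
  show "variation f a b \<le> C"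
    unfolding variation_def
    using ps_nonempty[OF assms(1)] assms(2)
    by (intro cSup_least) (auto simp: partition_sums_eq)
qed

lemma bv_split:
  assumes "bounded_variation_on f a c" "a \<le> b" "b \<le> c"
  shows "bounded_variation_on f a b" "bounded_variation_on f b c"
    "variation f a b + variation f b c \<le> variation f a c"
proof -
  have key: "psum f xs + psum f ys \<le> variation f a c" if
    "sorted xs" "xs \<noteq> []" "hd xs = a" "last xs = b" "sorted ys" "ys \<noteq> []" "hd ys = b" "last ys = c"
    for xs ys
  proof -
    have "psum f (xs @ tl ys) = psum f xs + psum f ys" using that by (intro psum_append) auto
    moreover have "sorted (xs @ tl ys)"
    proof -
      have "\<forall>x\<in>set xs. x \<le> b" using that(1-4) sorted_le_last by blast
      moreover have "\<forall>y\<in>set (tl ys). b \<le> y" using that(5-7) sorted_hd_le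
        by (metis list.set_sel(2) tl_Nil)
      moreover have "sorted (tl ys)" using that(5) by (simp add: sorted_tl)
      ultimately show ?thesis using that(1) by (auto simp: sorted_append intro: order.trans)
    qed
    moreover have "last (xs @ tl ys) = c"
    proof (cases "tl ys = []")
      case True
      then have "ys = [hd ys]" using that(6) by (cases ys) auto
      then have "xs @ tl ys = xs" using True by simp
      then show ?thesis using that \<open>ys = [hd ys]\<close> by (metis last_ConsL)
    next
      case False
      then have "last (tl ys) = last ys" using that(6) by (cases ys) auto
      then show ?thesis using False that by simp
    qed
    moreover have "hd (xs @ tl ys) = a" "xs @ tl ys \<noteq> []" using that(2,3) by simp_all
    ultimately show ?thesis using bv_psum_le[OF assms(1), of "xs @ tl ys"] by simp
  qed
  have ab: "psum f xs \<le> variation f a c - \<bar>f c - f b\<bar>" if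
    "sorted xs" "xs \<noteq> []" "hd xs = a" "last xs = b" for xs
    using key[OF that, of "[b, c]"] assms by simp
  show B1: "bounded_variation_on f a b" by (rule bv_sup_le(1)[OF assms(2) ab])
  have bc: "psum f ys \<le> variation f a c - \<bar>f b - f a\<bar>" if
    "sorted ys" "ys \<noteq> []" "hd ys = b" "last ys = c" for ys
    using key[OF _ _ _ _ that, of "[a, b]"] assms by simp
  show B2: "bounded_variation_on f b c" by (rule bv_sup_le(1)[OF assms(3) bc])
  have "psum f ys \<le> variation f a c - variation f a b" if
    "sorted ys" "ys \<noteq> []" "hd ys = b" "last ys = c" for ys
  proof -
    have "variation f a b \<le> variation f a c - psum f ys"
    proof (rule bv_sup_le(2)[OF assms(2)])
      fix xs assume "sorted xs" "xs \<noteq> []" "hd xs = a" "last xs = b"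
      from key[OF this that] show "psum f xs \<le> variation f a c - psum f ys" by linarith
    qed
    then show ?thesis by linarith
  qed
  then have "variation f b c \<le> variation f a c - variation f a b"
    by (intro bv_sup_le(2)[OF assms(3)])
  then show "variation f a b + variation f b c \<le> variation f a c" by linarith
qed

lemma bv_join:
  assumes "bounded_variation_on f a b" "bounded_variation_on f b c"
  shows "bounded_variation_on f a c" "variation f a c \<le> variation f a b + variation f b c"
proof -
  have ab: "a \<le> b" "b \<le> c" using assms unfolding bounded_variation_on_def by auto
  have "psum f xs \<le> variation f a b + variation f b c" if
    H: "sorted xs" "xs \<noteq> []" "hd xs = a" "last xs = c" for xs
  proof -
    obtain ys zs where h: "sorted ys \<and> ys \<noteq> [] \<and> hd ys = a \<and> last ys = b \<and>
     sorted zs \<and> zs \<noteq> [] \<and> hd zs = b \<and> last zs = c \<and> psum f xs \<le> psum f ys + psum f zs"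
      using psum_split[OF H(1,2), of b f] H ab by auto
    then show ?thesis using bv_psum_le[OF assms(1), of ys] bv_psum_le[OF assms(2), of zs] by auto
  qed
  then show "bounded_variation_on f a c" "variation f a c \<le> variation f a b + variation f b c"
    using bv_sup_le[of a c] ab by auto
qed

lemma bv_tele:
  assumes "a \<le> b" "\<And>x y. a \<le> x \<Longrightarrow> x \<le> y \<Longrightarrow> y \<le> b \<Longrightarrow> \<bar>f y - f x\<bar> \<le> \<psi> y - \<psi> x"
  shows "bounded_variation_on f a b" "variation f a b \<le> \<psi> b - \<psi> a"
proof -
  have "psum f xs \<le> \<psi> b - \<psi> a" if "sorted xs" "xs \<noteq> []" "hd xs = a" "last xs = b" for xs
  proof -
    have "set xs \<subseteq> {a..b}"
    proof
      fix x assume "x \<in> set xs"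
      then show "x \<in> {a..b}" using that sorted_le_last[of xs x] sorted_hd_le[of xs x] by auto
    qed
    then show ?thesis using psum_tele[OF that(1,2), of a b f \<psi>] assms(2) that by auto
  qed
  then show "bounded_variation_on f a b" "variation f a b \<le> \<psi> b - \<psi> a"
    using bv_sup_le[OF assms(1)] by auto
qed

lemma bv_small:
  assumes "bounded_variation_on f s s'" "s < s'" "\<epsilon> > 0"
    "\<And>y. s < y \<Longrightarrow> y \<le> s' \<Longrightarrow> \<bar>f y - f s\<bar> \<le> \<epsilon>"
  shows "\<exists>y. s < y \<and> y \<le> s' \<and> variation f s y \<le> 2 * \<epsilon>"
proof -
  have ne: "partition_sums f s s' \<noteq> {}" using ps_nonempty[of s s' f] assms(2) by auto
  have bdd: "bdd_above (partition_sums f s s')" using assms(1) unfolding bounded_variation_on_def by auto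
  have "variation f s s' - \<epsilon> < Sup (partition_sums f s s')"
    using assms(3) unfolding variation_def by simp
  then obtain p where p: "p \<in> partition_sums f s s'" "variation f s s' - \<epsilon> < p"
    using less_cSup_iff[OF ne bdd] by blast
  then obtain xs where xs: "sorted xs" "xs \<noteq> []" "hd xs = s" "last xs = s'" "p = psum f xs"
    unfolding partition_sums_eq by auto
  then obtain rest where rest: "xs = s # rest" by (cases xs) auto
  then have "rest \<noteq> []" using xs assms(2) by auto
  then have "last rest = s'" using xs rest by auto
  obtain y zs where yz: "s < y" "sorted zs" "zs \<noteq> []" "hd zs = y" "last zs = s'"
    "psum f (s # rest) = \<bar>f y - f s\<bar> + psum f zs"
    using psum_first[of s rest f] xs rest \<open>rest \<noteq> []\<close> \<open>last rest = s'\<close> assms(2) by auto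
  have "y \<le> s'"
    using yz(2-5) sorted_le_last[of zs "hd zs"] hd_in_set[of zs] by simp
  have sp: "bounded_variation_on f s y" "bounded_variation_on f y s'"
    "variation f s y + variation f y s' \<le> variation f s s'"
    using bv_split[OF assms(1), of y] yz(1) \<open>y \<le> s'\<close> by auto
  have "psum f zs \<le> variation f y s'" using bv_psum_le[OF sp(2) yz(2-5)] .
  moreover have "\<bar>f y - f s\<bar> \<le> \<epsilon>" using assms(4) yz(1) \<open>y \<le> s'\<close> by auto
  moreover have "p = \<bar>f y - f s\<bar> + psum f zs" using xs rest yz(6) by simp
  ultimately have "variation f s y \<le> 2 * \<epsilon>" using sp(3) p by linarith
  then show ?thesis using yz(1) \<open>y \<le> s'\<close> by auto
qed

lemma infsum_diff_finite:
  fixes \<phi> :: "'a \<Rightarrow> real"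
  assumes "\<phi> summable_on S" "finite F" "F \<subseteq> S"
  shows "infsum \<phi> (S - F) = infsum \<phi> S - sum \<phi> F"
proof -
  have "S = (S - F) \<union> F" using assms by auto
  moreover have "\<phi> summable_on (S - F)" using assms summable_on_subset_banach by blast
  ultimately have "infsum \<phi> S = infsum \<phi> (S - F) + infsum \<phi> F"
    using infsum_Un_disjoint[of \<phi> "S - F" F] assms by (metis Diff_disjoint inf_commute summable_on_finite)
  then show ?thesis using assms by simp
qed

lemma tail_small:
  fixes \<phi> :: "'a \<Rightarrow> real"
  assumes "\<phi> summable_on S" "\<epsilon> > 0"
  shows "\<exists>F. finite F \<and> F \<subseteq> S \<and> \<bar>infsum \<phi> (S - F)\<bar> < \<epsilon>"
proof -
  have "((\<lambda>F. sum \<phi> F) \<longlongrightarrow> infsum \<phi> S) (finite_subsets_at_top S)"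
    using infsum_tendsto[OF assms(1)] .
  then have "eventually (\<lambda>F. dist (sum \<phi> F) (infsum \<phi> S) < \<epsilon>) (finite_subsets_at_top S)"
    using assms(2) tendstoD by blast
  then obtain X where X: "finite X" "X \<subseteq> S"
    "\<forall>Y. finite Y \<and> X \<subseteq> Y \<and> Y \<subseteq> S \<longrightarrow> dist (sum \<phi> Y) (infsum \<phi> S) < \<epsilon>"
    unfolding eventually_finite_subsets_at_top by blast
  have "dist (sum \<phi> X) (infsum \<phi> S) < \<epsilon>" using X by blast
  then have "\<bar>infsum \<phi> (S - X)\<bar> < \<epsilon>"
    using infsum_diff_finite[OF assms(1) X(1,2)] by (simp add: dist_real_def abs_minus_commute)
  then show ?thesis using X by blast
qed

lemma infsum_abs_le:
  fixes \<phi> :: "'a \<Rightarrow> real"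
  assumes "\<phi> summable_on S" "A \<subseteq> S"
  shows "\<bar>infsum \<phi> A\<bar> \<le> infsum (\<lambda>x. \<bar>\<phi> x\<bar>) S"
proof -
  have a: "(\<lambda>x. norm (\<phi> x)) summable_on S" using assms(1) summable_on_iff_abs_summable_on_real by blast
  then have b: "(\<lambda>x. norm (\<phi> x)) summable_on A" using assms(2) summable_on_subset_banach by blast
  have "\<bar>infsum \<phi> A\<bar> \<le> infsum (\<lambda>x. \<bar>\<phi> x\<bar>) A"
    using norm_infsum_bound[OF b] by simp
  also have "\<dots> \<le> infsum (\<lambda>x. \<bar>\<phi> x\<bar>) S"
    using a b assms(2) by (intro infsum_mono2) auto
  finally show ?thesis .
qed

lemma infsum_vanish:
  fixes \<phi> :: "'a \<Rightarrow> real"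
  assumes "\<phi> summable_on S" "\<And>y. A y \<subseteq> S" "\<And>x. x \<in> S \<Longrightarrow> eventually (\<lambda>y. x \<notin> A y) G"
  shows "((\<lambda>y. infsum \<phi> (A y)) \<longlongrightarrow> 0) G"
proof (rule tendstoI)
  fix \<epsilon> :: real assume "\<epsilon> > 0"
  have abs: "(\<lambda>x. \<bar>\<phi> x\<bar>) summable_on S"
    using assms(1) summable_on_iff_abs_summable_on_real[of \<phi> S] by simp
  obtain F where F: "finite F" "F \<subseteq> S" "\<bar>infsum (\<lambda>x. \<bar>\<phi> x\<bar>) (S - F)\<bar> < \<epsilon>"
    using tail_small[OF abs \<open>\<epsilon> > 0\<close>] by blast
  have "eventually (\<lambda>y. \<forall>x\<in>F. x \<notin> A y) G"
    using F(1,2) assms(3) by (intro eventually_ball_finite) auto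
  then show "eventually (\<lambda>y. dist (infsum \<phi> (A y)) 0 < \<epsilon>) G"
  proof (rule eventually_mono)
    fix y assume "\<forall>x\<in>F. x \<notin> A y"
    then have "A y \<subseteq> S - F" using assms(2) by auto
    from infsum_abs_le[OF summable_on_subset_banach[OF assms(1)] this, OF Diff_subset]
    have "\<bar>infsum \<phi> (A y)\<bar> \<le> infsum (\<lambda>x. \<bar>\<phi> x\<bar>) (S - F)" .
    then show "dist (infsum \<phi> (A y)) 0 < \<epsilon>" using F(3) by simp
  qed
qed

lemma rl_tendsto:
  assumes "regulated_path f" "0 \<le> s"
  shows "(f \<longlongrightarrow> right_lim f s) (at_right s)"
proof -
  obtain l where l: "(f \<longlongrightarrow> l) (at_right s)" using assms unfolding regulated_path_def by blast
  then have "right_lim f s = l" unfolding right_lim_def by (intro tendsto_Lim) auto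
  then show ?thesis using l by simp
qed

lemma ll_tendsto:
  assumes "regulated_path f" "0 < s"
  shows "(f \<longlongrightarrow> left_lim f s) (at_left s)"
proof -
  obtain l where l: "(f \<longlongrightarrow> l) (at_left s)" using assms unfolding regulated_path_def by blast
  then have "left_lim f s = l" unfolding left_lim_def by (intro tendsto_Lim) auto
  then show ?thesis using l by simp
qed

lemma rl_tendsto0:
  assumes "regulated_path f" "0 \<le> s"
  shows "((\<lambda>\<delta>. f (s + \<delta>)) \<longlongrightarrow> right_lim f s) (at_right 0)"
  using rl_tendsto[OF assms] unfolding filterlim_at_right_to_0[of f _ s] by (simp add: add.commute)

lemma ll_tendsto0:
  assumes "regulated_path f" "0 < s"
  shows "((\<lambda>\<delta>. f (s - \<delta>)) \<longlongrightarrow> left_lim f s) (at_right 0)"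
proof -
  have "((\<lambda>x. f (- x)) \<longlongrightarrow> left_lim f s) (at_right (- s))"
    using ll_tendsto[OF assms] unfolding filterlim_at_left_to_right[of f _ s] .
  then show ?thesis unfolding filterlim_at_right_to_0[of _ _ "- s"] by simp
qed

lemma ev_small: "(c::real) > 0 \<Longrightarrow> eventually (\<lambda>\<delta>. 0 < \<delta> \<and> \<delta> < c) (at_right 0)"
  unfolding eventually_at_right_field by (intro exI[of _ c]) auto

lemma var_disjoint_sum:
  fixes F :: "real set" and l h :: "real \<Rightarrow> real"
  assumes "finite F" "bounded_variation_on f lo T"
    "\<forall>u\<in>F. lo \<le> l u \<and> l u \<le> h u \<and> h u \<le> T"
    "\<forall>u\<in>F. \<forall>v\<in>F. u < v \<longrightarrow> h u \<le> l v"
  shows "(\<Sum>u\<in>F. \<bar>f (h u) - f (l u)\<bar>) \<le> variation f lo T"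
  using assms
proof (induction F arbitrary: T rule: finite_linorder_max_induct)
  case empty
  then show ?case using bv_nonneg by simp
next
  case (insert b A)
  have b: "lo \<le> l b" "l b \<le> h b" "h b \<le> T" using insert(5) by auto
  have s1: "bounded_variation_on f lo (l b)" "bounded_variation_on f (l b) T"
    "variation f lo (l b) + variation f (l b) T \<le> variation f lo T"
    using bv_split[OF insert(4) b(1)] b by auto
  have s2: "bounded_variation_on f (l b) (h b)" "bounded_variation_on f (h b) T"
    "variation f (l b) (h b) + variation f (h b) T \<le> variation f (l b) T"
    using bv_split[OF s1(2) b(2,3)] by auto
  have "(\<Sum>u\<in>A. \<bar>f (h u) - f (l u)\<bar>) \<le> variation f lo (l b)"
  proof (rule insert(3)[OF s1(1)])
    show "\<forall>u\<in>A. lo \<le> l u \<and> l u \<le> h u \<and> h u \<le> l b"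
      using insert(2,5,6) by fastforce
    show "\<forall>u\<in>A. \<forall>v\<in>A. u < v \<longrightarrow> h u \<le> l v" using insert(6) by auto
  qed
  moreover have "\<bar>f (h b) - f (l b)\<bar> \<le> variation f (l b) (h b)" using bv_ge[OF s2(1)] .
  moreover have "b \<notin> A" using insert(2) by auto
  moreover have "0 \<le> variation f (h b) T" using bv_nonneg[OF s2(2)] .
  ultimately show ?case using insert(1) s1(3) s2(3) by simp
qed

lemma dj_finite_bound:
  assumes "regulated_path f" "bounded_variation_on f lo T" "0 \<le> lo" "finite F" "F \<subseteq> {lo..<T}"
  shows "(\<Sum>u\<in>F. \<bar>right_lim f u - f u\<bar>) \<le> variation f lo T"
proof -
  have lim: "((\<lambda>\<delta>. \<Sum>u\<in>F. \<bar>f (u + \<delta>) - f u\<bar>) \<longlongrightarrow> (\<Sum>u\<in>F. \<bar>right_lim f u - f u\<bar>)) (at_right 0)"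
  proof (intro tendsto_sum tendsto_rabs tendsto_diff tendsto_const)
    fix u assume "u \<in> F"
    then show "((\<lambda>\<delta>. f (u + \<delta>)) \<longlongrightarrow> right_lim f u) (at_right 0)"
      using assms(3,5) by (intro rl_tendsto0[OF assms(1)]) auto
  qed
  have ev1: "eventually (\<lambda>\<delta>. \<forall>u\<in>F. 0 < \<delta> \<and> \<delta> < T - u) (at_right 0)"
    using assms(4,5) by (intro eventually_ball_finite ballI ev_small) auto
  have ev2: "eventually (\<lambda>\<delta>. \<forall>u\<in>F. \<forall>v\<in>F. u < v \<longrightarrow> \<delta> < v - u) (at_right 0)"
  proof (intro eventually_ball_finite ballI assms(4))
    fix u v assume "u \<in> F" "v \<in> F"
    show "eventually (\<lambda>\<delta>. u < v \<longrightarrow> \<delta> < v - u) (at_right 0)"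
    proof (cases "u < v")
      case True
      then show ?thesis using ev_small[of "v - u"] by (auto elim: eventually_mono)
    qed simp
  qed
  have "eventually (\<lambda>\<delta>. (\<Sum>u\<in>F. \<bar>f (u + \<delta>) - f u\<bar>) \<le> variation f lo T) (at_right 0)"
    using ev1 ev2
  proof eventually_elim
    case (elim \<delta>)
    show ?case
      using var_disjoint_sum[OF assms(4,2), of "\<lambda>u. u" "\<lambda>u. u + \<delta>"] elim assms(5) by force
  qed
  then show ?thesis using tendsto_upperbound[OF lim] by simp
qed

lemma ej_finite_bound:
  assumes "regulated_path f" "bounded_variation_on f lo T" "0 \<le> lo" "finite F" "F \<subseteq> {lo<..T}"
  shows "(\<Sum>u\<in>F. \<bar>f u - left_lim f u\<bar>) \<le> variation f lo T"
proof -
  have lim: "((\<lambda>\<delta>. \<Sum>u\<in>F. \<bar>f u - f (u - \<delta>)\<bar>) \<longlongrightarrow> (\<Sum>u\<in>F. \<bar>f u - left_lim f u\<bar>)) (at_right 0)"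
  proof (intro tendsto_sum tendsto_rabs tendsto_diff tendsto_const)
    fix u assume "u \<in> F"
    then show "((\<lambda>\<delta>. f (u - \<delta>)) \<longlongrightarrow> left_lim f u) (at_right 0)"
      using assms(3,5) by (intro ll_tendsto0[OF assms(1)]) auto
  qed
  have ev1: "eventually (\<lambda>\<delta>. \<forall>u\<in>F. 0 < \<delta> \<and> \<delta> < u - lo) (at_right 0)"
    using assms(4,5) by (intro eventually_ball_finite ballI ev_small) auto
  have ev2: "eventually (\<lambda>\<delta>. \<forall>u\<in>F. \<forall>v\<in>F. u < v \<longrightarrow> \<delta> < v - u) (at_right 0)"
  proof (intro eventually_ball_finite ballI assms(4))
    fix u v assume "u \<in> F" "v \<in> F"
    show "eventually (\<lambda>\<delta>. u < v \<longrightarrow> \<delta> < v - u) (at_right 0)"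
    proof (cases "u < v")
      case True
      then show ?thesis using ev_small[of "v - u"] by (auto elim: eventually_mono)
    qed simp
  qed
  have "eventually (\<lambda>\<delta>. (\<Sum>u\<in>F. \<bar>f u - f (u - \<delta>)\<bar>) \<le> variation f lo T) (at_right 0)"
    using ev1 ev2
  proof eventually_elim
    case (elim \<delta>)
    show ?case
      using var_disjoint_sum[OF assms(4,2), of "\<lambda>u. u - \<delta>" "\<lambda>u. u"] elim assms(5) by force
  qed
  then show ?thesis using tendsto_upperbound[OF lim] by simp
qed

definition dj :: "(real \<Rightarrow> real) \<Rightarrow> real \<Rightarrow> real" where
  "dj f s = right_lim f s - f s"

definition Jf :: "(real \<Rightarrow> real) \<Rightarrow> real \<Rightarrow> real" where
  "Jf f s = infsum (dj f) {0..<s}"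

definition Td :: "(real \<Rightarrow> real) \<Rightarrow> real \<Rightarrow> real" where
  "Td f s = infsum (\<lambda>u. \<bar>dj f u\<bar>) {0..<s}"

lemma rcp_eq: "right_cont_part f t = f t - Jf f t"
  unfolding right_cont_part_def Jf_def dj_def by simp

lemma bvp: "bv_path f \<Longrightarrow> 0 \<le> T \<Longrightarrow> bounded_variation_on f 0 T"
  unfolding bv_path_def by auto

lemma bv_sub:
  assumes "bv_path f" "0 \<le> a" "a \<le> b"
  shows "bounded_variation_on f a b"
  using bv_split(2)[OF bvp[OF assms(1), of b] assms(2,3)] assms by auto

lemma var_diff:
  assumes "bv_path f" "0 \<le> a" "a \<le> b"
  shows "variation f a b \<le> variation f 0 b - variation f 0 a"
  using bv_split(3)[OF bvp[OF assms(1), of b] assms(2,3)] assms by auto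

lemma incr_le_var:
  assumes "bv_path f" "0 \<le> a" "a \<le> b"
  shows "\<bar>f b - f a\<bar> \<le> variation f 0 b - variation f 0 a"
  using bv_ge[OF bv_sub[OF assms]] var_diff[OF assms] by linarith

lemma dj_abs_summable:
  assumes "regulated_path f" "bv_path f"
  shows "(\<lambda>u. \<bar>dj f u\<bar>) summable_on {0..<T}"
proof (cases "0 \<le> T")
  case True
  show ?thesis
  proof (rule nonneg_bdd_above_summable_on)
    show "bdd_above (sum (\<lambda>u. \<bar>dj f u\<bar>) ` {F. F \<subseteq> {0..<T} \<and> finite F})"
      using dj_finite_bound[OF assms(1) bvp[OF assms(2) True]] unfolding dj_def
      by (intro bdd_aboveI2[of _ _ "variation f 0 T"]) auto
  qed simp
next
  case False
  then show ?thesis by simp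
qed

lemma dj_summable:
  assumes "regulated_path f" "bv_path f"
  shows "dj f summable_on {0..<T}"
  using dj_abs_summable[OF assms, of T] summable_on_iff_abs_summable_on_real[of "dj f"] by simp

lemma dj_summable_sub:
  assumes "regulated_path f" "bv_path f" "A \<subseteq> {0..<T}"
  shows "dj f summable_on A" "(\<lambda>u. \<bar>dj f u\<bar>) summable_on A"
  using summable_on_subset_banach[OF dj_summable[OF assms(1,2)] assms(3)]
    summable_on_subset_banach[OF dj_abs_summable[OF assms(1,2)] assms(3)] by auto

lemma Td_le:
  assumes "regulated_path f" "bv_path f" "0 \<le> T"
  shows "Td f T \<le> variation f 0 T"
  unfolding Td_def
  using dj_finite_bound[OF assms(1) bvp[OF assms(2,3)]] unfolding dj_def
  by (intro infsum_le_finite_sums) (use dj_abs_summable[OF assms(1,2), of T] in \<open>auto simp: dj_def\<close>)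

lemma ej_abs_summable:
  assumes "regulated_path f" "bv_path f"
  shows "(\<lambda>u. \<bar>f u - left_lim f u\<bar>) summable_on {0<..T}"
proof (cases "0 \<le> T")
  case True
  show ?thesis
  proof (rule nonneg_bdd_above_summable_on)
    show "bdd_above (sum (\<lambda>u. \<bar>f u - left_lim f u\<bar>) ` {F. F \<subseteq> {0<..T} \<and> finite F})"
      using ej_finite_bound[OF assms(1) bvp[OF assms(2) True]]
      by (intro bdd_aboveI2[of _ _ "variation f 0 T"]) auto
  qed simp
next
  case False
  then show ?thesis by simp
qed

lemma infsum_split_Ico:
  fixes \<phi> :: "real \<Rightarrow> real"
  assumes "\<phi> summable_on {0..<T}" "0 \<le> a" "a \<le> b" "b \<le> T"
  shows "infsum \<phi> {0..<b} = infsum \<phi> {0..<a} + infsum \<phi> {a..<b}"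
proof -
  have "{0..<b} = {0..<a} \<union> {a..<b}" using assms by auto
  moreover have "\<phi> summable_on {0..<a}" "\<phi> summable_on {a..<b}"
    using assms by (auto intro: summable_on_subset_banach[OF assms(1)])
  ultimately show ?thesis by (simp add: infsum_Un_disjoint ivl_disj_int_two(3))
qed

lemma J_diff:
  assumes "regulated_path f" "bv_path f" "0 \<le> a" "a \<le> b"
  shows "Jf f b - Jf f a = infsum (dj f) {a..<b}"
  using infsum_split_Ico[OF dj_summable[OF assms(1,2), of b] assms(3,4)] unfolding Jf_def by simp

lemma Td_diff:
  assumes "regulated_path f" "bv_path f" "0 \<le> a" "a \<le> b"
  shows "Td f b - Td f a = infsum (\<lambda>u. \<bar>dj f u\<bar>) {a..<b}"
  using infsum_split_Ico[OF dj_abs_summable[OF assms(1,2), of b] assms(3,4)] unfolding Td_def by simp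

lemma J_incr:
  assumes "regulated_path f" "bv_path f" "0 \<le> a" "a \<le> b"
  shows "\<bar>Jf f b - Jf f a\<bar> \<le> Td f b - Td f a"
proof -
  have s: "dj f summable_on {a..<b}"
    by (rule dj_summable_sub(1)[OF assms(1,2), of _ b]) (use assms(3) in auto)
  show ?thesis unfolding J_diff[OF assms] Td_diff[OF assms] using infsum_abs_le[OF s order_refl] .
qed

lemma g_incr:
  assumes "regulated_path f" "bv_path f" "0 \<le> a" "a \<le> b"
  shows "\<bar>right_cont_part f b - right_cont_part f a\<bar>
     \<le> (variation f 0 b + Td f b) - (variation f 0 a + Td f a)"
  using J_incr[OF assms] incr_le_var[OF assms(2-4)] unfolding rcp_eq by linarith

lemma g_bv:
  assumes "regulated_path f" "bv_path f" "0 \<le> lo" "lo \<le> hi"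
  shows "bounded_variation_on (right_cont_part f) lo hi"
  using bv_tele(1)[OF assms(4), of "right_cont_part f" "\<lambda>x. variation f 0 x + Td f x"]
    g_incr[OF assms(1,2)] assms(3) by auto

lemma g_bv_path:
  assumes "regulated_path f" "bv_path f"
  shows "bv_path (right_cont_part f)"
  unfolding bv_path_def using g_bv[OF assms] by auto

lemma J_right:
  assumes "regulated_path f" "bv_path f" "0 \<le> s"
  shows "((\<lambda>y. infsum (dj f) {s<..<min y (s + 1)}) \<longlongrightarrow> 0) (at_right s)"
proof (rule infsum_vanish[OF dj_summable[OF assms(1,2), of "s + 1"]])
  show "{s<..<min y (s + 1)} \<subseteq> {0..<s + 1}" for y using assms(3) by auto
  fix x assume "x \<in> {0..<s + 1}"
  show "eventually (\<lambda>y. x \<notin> {s<..<min y (s + 1)}) (at_right s)"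
  proof (cases "s < x")
    case True
    then show ?thesis unfolding eventually_at_right_field
      by (intro exI[of _ x]) auto
  next
    case False
    then show ?thesis by auto
  qed
qed

lemma g_right_cont:
  assumes "regulated_path f" "bv_path f" "0 \<le> s"
  shows "(right_cont_part f \<longlongrightarrow> right_cont_part f s) (at_right s)"
proof -
  let ?g = "right_cont_part f"
  have ev: "eventually (\<lambda>y. f y - Jf f s - dj f s - infsum (dj f) {s<..<min y (s + 1)} = ?g y) (at_right s)"
  proof -
    have "eventually (\<lambda>y. s < y \<and> y < s + 1) (at_right s)"
      unfolding eventually_at_right_field by (intro exI[of _ "s + 1"]) auto
    then show ?thesis
    proof (rule eventually_mono)
      fix y assume y: "s < y \<and> y < s + 1"
      then have m: "min y (s + 1) = y" by simp
      have "{s..<y} = insert s {s<..<y}" using y by auto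
      moreover have "dj f summable_on {s<..<y}"
        by (rule dj_summable_sub(1)[OF assms(1,2), of _ y]) (use assms(3) in auto)
      ultimately have "infsum (dj f) {s..<y} = dj f s + infsum (dj f) {s<..<y}"
        by (simp add: infsum_insert)
      then have "Jf f y = Jf f s + dj f s + infsum (dj f) {s<..<y}"
        using J_diff[OF assms(1,2,3), of y] y by simp
      then show "f y - Jf f s - dj f s - infsum (dj f) {s<..<min y (s + 1)} = ?g y"
        unfolding rcp_eq m by simp
    qed
  qed
  have "((\<lambda>y. f y - Jf f s - dj f s - infsum (dj f) {s<..<min y (s + 1)}) \<longlongrightarrow>
      right_lim f s - Jf f s - dj f s - 0) (at_right s)"
    by (intro tendsto_diff rl_tendsto[OF assms(1,3)] tendsto_const J_right[OF assms])
  moreover have "right_lim f s - Jf f s - dj f s - 0 = ?g s"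
    unfolding rcp_eq dj_def by simp
  ultimately have L: "((\<lambda>y. f y - Jf f s - dj f s - infsum (dj f) {s<..<min y (s + 1)}) \<longlongrightarrow> ?g s) (at_right s)"
    by simp
  show ?thesis using iffD1[OF tendsto_cong[OF ev] L] .
qed

lemma J_left:
  assumes "regulated_path f" "bv_path f" "0 < s"
  shows "((\<lambda>y. infsum (dj f) {max y 0..<s}) \<longlongrightarrow> 0) (at_left s)"
proof (rule infsum_vanish[OF dj_summable[OF assms(1,2), of "s"]])
  show "{max y 0..<s} \<subseteq> {0..<s}" for y by auto
  fix x assume x: "x \<in> {0..<s}"
  show "eventually (\<lambda>y. x \<notin> {max y 0..<s}) (at_left s)"
    unfolding eventually_at_left_field using x by (intro exI[of _ x]) auto
qed

lemma g_left_lim: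
  assumes "regulated_path f" "bv_path f" "0 < s"
  shows "(right_cont_part f \<longlongrightarrow> left_lim f s - Jf f s) (at_left s)"
proof -
  let ?g = "right_cont_part f"
  have ev: "eventually (\<lambda>y. f y - Jf f s + infsum (dj f) {max y 0..<s} = ?g y) (at_left s)"
  proof -
    have "eventually (\<lambda>y. 0 < y \<and> y < s) (at_left s)"
      unfolding eventually_at_left_field using assms(3) by (intro exI[of _ 0]) auto
    then show ?thesis
    proof (rule eventually_mono)
      fix y assume y: "0 < y \<and> y < s"
      then have m: "max y 0 = y" by simp
      show "f y - Jf f s + infsum (dj f) {max y 0..<s} = ?g y"
        unfolding rcp_eq m using J_diff[OF assms(1,2), of y s] y by simp
    qed
  qed
  have "((\<lambda>y. f y - Jf f s + infsum (dj f) {max y 0..<s}) \<longlongrightarrow> left_lim f s - Jf f s + 0) (at_left s)"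
    by (intro tendsto_add tendsto_diff ll_tendsto[OF assms(1,3)] tendsto_const J_left[OF assms])
  then have L: "((\<lambda>y. f y - Jf f s + infsum (dj f) {max y 0..<s}) \<longlongrightarrow> left_lim f s - Jf f s) (at_left s)"
    by simp
  show ?thesis using iffD1[OF tendsto_cong[OF ev] L] .
qed

definition Vg :: "(real \<Rightarrow> real) \<Rightarrow> real \<Rightarrow> real" where
  "Vg g s = (if s \<le> 0 then 0 else variation g 0 s)"

definition Wg :: "(real \<Rightarrow> real) \<Rightarrow> real \<Rightarrow> real" where
  "Wg g s = (if s \<le> 0 then 0 else variation g 0 s - (g s - g 0))"

lemma stieltjes_eq:
  "stieltjes_Ioc g h a b =
     (\<integral>x\<in>{a<..b}. h x \<partial>interval_measure (Vg g)) - (\<integral>x\<in>{a<..b}. h x \<partial>interval_measure (Wg g))"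
proof -
  have "Vg g = (\<lambda>s. if s \<le> 0 then 0 else variation g 0 s)" by (rule ext) (simp add: Vg_def)
  moreover have "Wg g = (\<lambda>s. if s \<le> 0 then 0 else variation g 0 s - (g s - g 0))"
    by (rule ext) (simp add: Wg_def)
  ultimately show ?thesis unfolding stieltjes_Ioc_def Let_def by simp
qed

lemma Vg_mono:
  assumes "bv_path g" "x \<le> y"
  shows "Vg g x \<le> Vg g y"
proof -
  consider "y \<le> 0" | "x \<le> 0" "0 < y" | "0 < x" by linarith
  then show ?thesis
  proof cases
    case 1 then show ?thesis using assms by (simp add: Vg_def)
  next
    case 2 then show ?thesis using bv_nonneg[OF bvp[OF assms(1), of y]] by (simp add: Vg_def)
  next
    case 3
    then show ?thesis using var_diff[OF assms(1), of x y] bv_nonneg[OF bv_sub[OF assms(1), of x y]] assms(2)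
      by (simp add: Vg_def)
  qed
qed

lemma Wg_mono:
  assumes "bv_path g" "x \<le> y"
  shows "Wg g x \<le> Wg g y"
proof -
  consider "y \<le> 0" | "x \<le> 0" "0 < y" | "0 < x" by linarith
  then show ?thesis
  proof cases
    case 1 then show ?thesis using assms by (simp add: Wg_def)
  next
    case 2 then show ?thesis using bv_ge[OF bvp[OF assms(1), of y]] by (simp add: Wg_def)
  next
    case 3
    then show ?thesis using incr_le_var[OF assms(1), of x y] assms(2)
      by (simp add: Wg_def)
  qed
qed

lemma Vg_Wg_diff:
  assumes "0 \<le> a" "a \<le> b"
  shows "(Vg g b - Vg g a) - (Wg g b - Wg g a) = g b - g a"
proof (cases "b \<le> 0")
  case True
  then have "a = 0" "b = 0" using assms by auto
  then show ?thesis by (simp add: Vg_def Wg_def)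
qed (use assms in \<open>auto simp: Vg_def Wg_def\<close>)

lemma Vg_le_var:
  assumes "bv_path g" "0 \<le> s" "s < y"
  shows "Vg g y - Vg g s \<le> variation g s y"
proof (cases "s = 0")
  case True
  then show ?thesis using assms by (simp add: Vg_def)
next
  case False
  then have "0 < s" using assms by simp
  then show ?thesis
    using bv_join(2)[OF bv_sub[OF assms(1), of 0 s] bv_sub[OF assms(1), of s y]] assms
    by (simp add: Vg_def)
qed

lemma Vg_right_cont:
  assumes "bv_path g" "\<And>s. 0 \<le> s \<Longrightarrow> (g \<longlongrightarrow> g s) (at_right s)"
  shows "continuous (at_right s) (Vg g)"
  unfolding continuous_within
proof (cases "s < 0")
  case True
  have "eventually (\<lambda>y. Vg g y = Vg g s) (at_right s)"
    unfolding eventually_at_right_field using True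
    by (intro exI[of _ 0]) (auto simp: Vg_def)
  then show "(Vg g \<longlongrightarrow> Vg g s) (at_right s)"
    by (rule tendsto_eventually)
next
  case False
  then have s0: "0 \<le> s" by simp
  show "(Vg g \<longlongrightarrow> Vg g s) (at_right s)"
  proof (rule tendstoI)
    fix \<epsilon> :: real assume "\<epsilon> > 0"
    have "eventually (\<lambda>y. dist (g y) (g s) < \<epsilon> / 4) (at_right s)"
      using tendstoD[OF assms(2)[OF s0], of "\<epsilon> / 4"] \<open>\<epsilon> > 0\<close> by simp
    then obtain b where b: "b > s" "\<And>y. s < y \<Longrightarrow> y < b \<Longrightarrow> dist (g y) (g s) < \<epsilon> / 4"
      unfolding eventually_at_right_field by blast
    define s' where "s' = (s + min b (s + 1)) / 2"
    have s': "s < s'" "s' < b" using b(1) unfolding s'_def by auto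
    obtain y1 where y1: "s < y1" "y1 \<le> s'" "variation g s y1 \<le> 2 * (\<epsilon> / 4)"
    proof -
      have "\<exists>y. s < y \<and> y \<le> s' \<and> variation g s y \<le> 2 * (\<epsilon> / 4)"
      proof (rule bv_small[OF bv_sub[OF assms(1) s0] s'(1)])
        show "0 < \<epsilon> / 4" using \<open>\<epsilon> > 0\<close> by simp
        fix y assume "s < y" "y \<le> s'"
        then show "\<bar>g y - g s\<bar> \<le> \<epsilon> / 4" using b(2)[of y] s' by (simp add: dist_real_def)
      qed (use s' in auto)
      then show ?thesis using that by blast
    qed
    have "eventually (\<lambda>y. s < y \<and> y < y1) (at_right s)"
      unfolding eventually_at_right_field using y1(1) by (intro exI[of _ y1]) auto
    then show "eventually (\<lambda>y. dist (Vg g y) (Vg g s) < \<epsilon>) (at_right s)"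
    proof (rule eventually_mono)
      fix y assume y: "s < y \<and> y < y1"
      have "variation g s y + variation g y y1 \<le> variation g s y1"
        using bv_split(3)[OF bv_sub[OF assms(1) s0, of y1]] y y1 by auto
      moreover have "0 \<le> variation g y y1" using bv_nonneg[OF bv_sub[OF assms(1), of y y1]] y s0 by auto
      moreover have "Vg g y - Vg g s \<le> variation g s y" using Vg_le_var[OF assms(1) s0] y by auto
      moreover have "Vg g s \<le> Vg g y" using Vg_mono[OF assms(1)] y by auto
      ultimately show "dist (Vg g y) (Vg g s) < \<epsilon>" using y1(3) \<open>\<epsilon> > 0\<close>
        by (simp add: dist_real_def)
    qed
  qed
qed

lemma Wg_right_cont:
  assumes "bv_path g" "\<And>s. 0 \<le> s \<Longrightarrow> (g \<longlongrightarrow> g s) (at_right s)"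
  shows "continuous (at_right s) (Wg g)"
  unfolding continuous_within
proof (cases "s < 0")
  case True
  have "eventually (\<lambda>y. Wg g y = Wg g s) (at_right s)"
    unfolding eventually_at_right_field using True
    by (intro exI[of _ 0]) (auto simp: Wg_def)
  then show "(Wg g \<longlongrightarrow> Wg g s) (at_right s)"
    by (rule tendsto_eventually)
next
  case False
  then have s0: "0 \<le> s" by simp
  have ev: "eventually (\<lambda>y. Vg g y - (g y - g 0) = Wg g y) (at_right s)"
    unfolding eventually_at_right_field using s0
    by (intro exI[of _ "s + 1"]) (auto simp: Wg_def Vg_def)
  have "((\<lambda>y. Vg g y - (g y - g 0)) \<longlongrightarrow> Vg g s - (g s - g 0)) (at_right s)"
    using Vg_right_cont[OF assms, of s] assms(2)[OF s0] unfolding continuous_within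
    by (intro tendsto_intros) auto
  moreover have "Vg g s - (g s - g 0) = Wg g s" using s0 by (auto simp: Vg_def Wg_def)
  ultimately have L: "((\<lambda>y. Vg g y - (g y - g 0)) \<longlongrightarrow> Wg g s) (at_right s)" by simp
  show "(Wg g \<longlongrightarrow> Wg g s) (at_right s)" using iffD1[OF tendsto_cong[OF ev] L] .
qed

definition goodF :: "(real \<Rightarrow> real) \<Rightarrow> bool" where
  "goodF F \<longleftrightarrow> (\<forall>x y. x \<le> y \<longrightarrow> F x \<le> F y) \<and> (\<forall>a. continuous (at_right a) F)"

lemma eq_by_eps:
  fixes x y K :: real
  assumes "\<And>\<epsilon>. \<epsilon> > 0 \<Longrightarrow> \<bar>x - y\<bar> \<le> K * \<epsilon>" "K \<ge> 0"
  shows "x = y"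
proof (rule ccontr)
  assume "x \<noteq> y"
  then have p: "\<bar>x - y\<bar> > 0" by simp
  define \<epsilon> where "\<epsilon> = \<bar>x - y\<bar> / (2 * (K + 1))"
  have e: "\<epsilon> > 0" using p assms(2) unfolding \<epsilon>_def by simp
  have "K * \<epsilon> < \<bar>x - y\<bar>"
  proof -
    have "K * \<epsilon> \<le> (K + 1) * \<epsilon>" using e by simp
    also have "\<dots> = \<bar>x - y\<bar> / 2" unfolding \<epsilon>_def using assms(2) by (simp add: field_simps)
    finally show ?thesis using p by simp
  qed
  then show False using assms(1)[OF e] by simp
qed

lemma meas_conv: "h \<in> borel_measurable borel \<Longrightarrow> h \<in> borel_measurable (interval_measure F)"
  by (subst measurable_cong_sets[OF sets_interval_measure refl])

lemma im_Ioc: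
  assumes "goodF F" "a \<le> b"
  shows "emeasure (interval_measure F) {a<..b} = ennreal (F b - F a)"
    "measure (interval_measure F) {a<..b} = F b - F a"
  using emeasure_interval_measure_Ioc[OF assms(2), of F] measure_interval_measure_Ioc[OF assms(2), of F]
    assms(1) unfolding goodF_def by auto

lemma im_fin:
  assumes "goodF F" "a \<le> b"
  shows "{a<..b} \<in> fmeasurable (interval_measure F)"
  using im_Ioc(1)[OF assms] by (intro fmeasurableI) auto

lemma im_sub_fin:
  assumes "goodF F" "a \<le> b" "A \<subseteq> {a<..b}" "A \<in> sets borel"
  shows "emeasure (interval_measure F) A < \<infinity>"
    "measure (interval_measure F) A \<le> F b - F a"
proof -
  have "emeasure (interval_measure F) A \<le> emeasure (interval_measure F) {a<..b}"
    using assms(3) by (intro emeasure_mono) auto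
  then show "emeasure (interval_measure F) A < \<infinity>" using im_Ioc(1)[OF assms(1,2)]
    by (simp add: order_le_less_trans)
  show "measure (interval_measure F) A \<le> F b - F a"
    using measure_mono_fmeasurable[OF assms(3) _ im_fin[OF assms(1,2)]] assms(4) im_Ioc(2)[OF assms(1,2)]
    by simp
qed

lemma bounded_integrable:
  fixes h :: "real \<Rightarrow> real"
  assumes "goodF F" "a \<le> b" "(\<lambda>x. indicator {a<..b} x * h x) \<in> borel_measurable borel"
    "\<And>x. x \<in> {a<..b} \<Longrightarrow> \<bar>h x\<bar> \<le> B"
  shows "integrable (interval_measure F) (\<lambda>x. indicator {a<..b} x * h x)"
proof (rule Bochner_Integration.integrable_bound[where f="\<lambda>x. B * indicator {a<..b} x"])
  show "integrable (interval_measure F) (\<lambda>x. B * indicator {a<..b} x)"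
    using im_Ioc(1)[OF assms(1,2)] by (intro integrable_mult_right integrable_real_indicator) auto
  show "(\<lambda>x. indicator {a<..b} x * h x) \<in> borel_measurable (interval_measure F)"
    using meas_conv[OF assms(3)] .
  show "AE x in interval_measure F. norm (indicator {a<..b} x * h x) \<le> norm (B * (indicator {a<..b} x :: real))"
    using assms(4) by (intro AE_I2) (force simp: indicator_def abs_mult intro: order_trans[OF _ abs_ge_self])
qed

lemma integral_close:
  fixes h1 h2 :: "real \<Rightarrow> real"
  assumes "goodF F" "a \<le> b"
    "integrable (interval_measure F) (\<lambda>x. indicator {a<..b} x * h1 x)"
    "integrable (interval_measure F) (\<lambda>x. indicator {a<..b} x * h2 x)"
    "\<And>x. x \<in> {a<..b} \<Longrightarrow> \<bar>h1 x - h2 x\<bar> \<le> \<epsilon>"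
  shows "\<bar>(\<integral>x. indicator {a<..b} x * h1 x \<partial>interval_measure F) - (\<integral>x. indicator {a<..b} x * h2 x \<partial>interval_measure F)\<bar>
    \<le> \<epsilon> * (F b - F a)"
proof -
  let ?M = "interval_measure F"
  have "(\<integral>x. indicator {a<..b} x * h1 x \<partial>?M) - (\<integral>x. indicator {a<..b} x * h2 x \<partial>?M)
      = (\<integral>x. indicator {a<..b} x * h1 x - indicator {a<..b} x * h2 x \<partial>?M)"
    using assms(3,4) by simp
  also have "\<bar>\<dots>\<bar> \<le> (\<integral>x. \<epsilon> * indicator {a<..b} x \<partial>?M)"
  proof (rule integral_abs_bound_integral)
    show "integrable ?M (\<lambda>x. \<epsilon> * indicator {a<..b} x)"
      using im_Ioc(1)[OF assms(1,2)] by (intro integrable_mult_right integrable_real_indicator) auto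
    show "integrable ?M (\<lambda>x. indicator {a<..b} x * h1 x - indicator {a<..b} x * h2 x)"
      using assms(3,4) by simp
    fix x show "\<bar>indicator {a<..b} x * h1 x - indicator {a<..b} x * h2 x\<bar> \<le> \<epsilon> * indicator {a<..b} x"
      using assms(5)[of x] by (auto simp: indicator_def)
  qed
  also have "\<dots> = \<epsilon> * (F b - F a)"
    using im_Ioc(2)[OF assms(1,2)] by simp
  finally show ?thesis .
qed

lemma approx_measurable:
  fixes h :: "real \<Rightarrow> real" and \<psi> :: "nat \<Rightarrow> real \<Rightarrow> real"
  assumes "\<And>n::nat. (\<lambda>x. indicator I x * \<psi> n x) \<in> borel_measurable borel"
    "\<And>n x. x \<in> I \<Longrightarrow> \<bar>h x - \<psi> n x\<bar> \<le> inverse (real (Suc n))"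
  shows "(\<lambda>x. indicator I x * h x) \<in> borel_measurable borel"
proof (rule borel_measurable_LIMSEQ_real[OF _ assms(1)])
  fix x :: real
  show "(\<lambda>n. indicator I x * \<psi> n x) \<longlonglongrightarrow> indicator I x * h x"
  proof (cases "x \<in> I")
    case True
    have "(\<lambda>n. \<psi> n x - h x) \<longlonglongrightarrow> 0"
    proof (rule Lim_null_comparison[OF _ LIMSEQ_inverse_real_of_nat])
      show "eventually (\<lambda>n. norm (\<psi> n x - h x) \<le> inverse (real (Suc n))) sequentially"
        using assms(2)[OF True] by (intro always_eventually allI) (simp add: abs_minus_commute)
    qed
    then have "(\<lambda>n. (\<psi> n x - h x) + h x) \<longlonglongrightarrow> 0 + h x" by (intro tendsto_add) auto
    then show ?thesis using True by simp
  next
    case False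
    then show ?thesis by simp
  qed
qed

lemma approx_integral:
  fixes h :: "real \<Rightarrow> real" and T :: real
  assumes "goodF F" "a \<le> b"
    "\<And>\<epsilon>. \<epsilon> > 0 \<Longrightarrow> \<exists>\<psi> c. (\<lambda>x. indicator {a<..b} x * \<psi> x) \<in> borel_measurable borel \<and>
        (\<forall>x\<in>{a<..b}. \<bar>\<psi> x\<bar> \<le> c) \<and> (\<forall>x\<in>{a<..b}. \<bar>h x - \<psi> x\<bar> \<le> \<epsilon>) \<and>
        \<bar>(\<integral>x. indicator {a<..b} x * \<psi> x \<partial>interval_measure F) - T\<bar> \<le> \<epsilon>"
  shows "integrable (interval_measure F) (\<lambda>x. indicator {a<..b} x * h x)"
    "(\<integral>x. indicator {a<..b} x * h x \<partial>interval_measure F) = T"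
proof -
  let ?I = "{a<..b}" and ?M = "interval_measure F"
  have "\<forall>n::nat. \<exists>\<psi>. (\<lambda>x. indicator ?I x * \<psi> x) \<in> borel_measurable borel \<and>
        (\<forall>x\<in>?I. \<bar>h x - \<psi> x\<bar> \<le> inverse (real (Suc n)))"
    using assms(3) by (metis inverse_positive_iff_positive of_nat_0_less_iff zero_less_Suc)
  then obtain \<psi>s where \<psi>s: "\<And>n. (\<lambda>x. indicator ?I x * \<psi>s n x) \<in> borel_measurable borel"
    "\<And>n x. x \<in> ?I \<Longrightarrow> \<bar>h x - \<psi>s n x\<bar> \<le> inverse (real (Suc n))"
    by metis
  have meas: "(\<lambda>x. indicator ?I x * h x) \<in> borel_measurable borel"
    using approx_measurable[OF \<psi>s] .
  obtain \<psi>1 c1 where p1: "\<forall>x\<in>?I. \<bar>\<psi>1 x\<bar> \<le> c1" "\<forall>x\<in>?I. \<bar>h x - \<psi>1 x\<bar> \<le> 1"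
    using assms(3)[of 1] by auto
  have hb: "\<bar>h x\<bar> \<le> c1 + 1" if "x \<in> ?I" for x using p1 that by force
  show int: "integrable ?M (\<lambda>x. indicator ?I x * h x)"
    using bounded_integrable[OF assms(1,2) meas hb] .
  show "(\<integral>x. indicator ?I x * h x \<partial>?M) = T"
  proof (rule eq_by_eps)
    fix \<epsilon> :: real assume e: "\<epsilon> > 0"
    obtain \<psi> c where p: "(\<lambda>x. indicator ?I x * \<psi> x) \<in> borel_measurable borel"
        "\<forall>x\<in>?I. \<bar>\<psi> x\<bar> \<le> c" "\<forall>x\<in>?I. \<bar>h x - \<psi> x\<bar> \<le> \<epsilon>"
        "\<bar>(\<integral>x. indicator ?I x * \<psi> x \<partial>?M) - T\<bar> \<le> \<epsilon>"
      using assms(3)[OF e] by blast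
    have ip: "integrable ?M (\<lambda>x. indicator ?I x * \<psi> x)"
      using bounded_integrable[OF assms(1,2) p(1)] p(2) by blast
    have "\<bar>(\<integral>x. indicator ?I x * h x \<partial>?M) - (\<integral>x. indicator ?I x * \<psi> x \<partial>?M)\<bar> \<le> \<epsilon> * (F b - F a)"
      using integral_close[OF assms(1,2) int ip] p(3) by blast
    then show "\<bar>(\<integral>x. indicator ?I x * h x \<partial>?M) - T\<bar> \<le> (F b - F a + 1) * \<epsilon>"
      using p(4) by (simp add: algebra_simps)
  next
    show "0 \<le> F b - F a + 1" using assms(1,2) unfolding goodF_def by force
  qed
qed

lemma indicator_sum_singletons:
  fixes \<phi> :: "real \<Rightarrow> real"
  assumes "finite A"
  shows "\<phi> x * indicator A x = (\<Sum>u\<in>A. \<phi> u * indicator {u} x)"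
proof -
  have "(\<Sum>u\<in>A. \<phi> u * indicator {u} x) = (\<Sum>u\<in>A. if x = u then \<phi> u else 0)"
    by (intro sum.cong) (auto simp: indicator_def)
  also have "\<dots> = (if x \<in> A then \<phi> x else 0)" using assms by (simp add: sum.delta)
  finally show ?thesis by (simp add: indicator_def)
qed

lemma single_le_infsum:
  fixes \<phi> :: "'a \<Rightarrow> real"
  assumes "(\<lambda>x. \<bar>\<phi> x\<bar>) summable_on A" "x \<in> A"
  shows "\<bar>\<phi> x\<bar> \<le> infsum (\<lambda>x. \<bar>\<phi> x\<bar>) A"
proof -
  have "infsum (\<lambda>x. \<bar>\<phi> x\<bar>) {x} \<le> infsum (\<lambda>x. \<bar>\<phi> x\<bar>) A"
    using assms by (intro infsum_mono2) auto
  then show ?thesis by simp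
qed

lemma atom_integral:
  fixes \<phi> :: "real \<Rightarrow> real"
  assumes "goodF F" "a \<le> b" "\<phi> summable_on {a<..b}"
  shows "integrable (interval_measure F) (\<lambda>x. indicator {a<..b} x * \<phi> x)"
    "(\<lambda>x. \<phi> x * measure (interval_measure F) {x}) summable_on {a<..b}"
    "(\<integral>x. indicator {a<..b} x * \<phi> x \<partial>interval_measure F) =
       infsum (\<lambda>x. \<phi> x * measure (interval_measure F) {x}) {a<..b}"
proof -
  let ?I = "{a<..b}" and ?M = "interval_measure F"
  define C where "C = F b - F a"
  have C0: "0 \<le> C" using assms(1,2) unfolding goodF_def C_def by force
  have ab: "(\<lambda>x. \<bar>\<phi> x\<bar>) summable_on ?I"
    using assms(3) summable_on_iff_abs_summable_on_real[of \<phi>] by simp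
  have mx: "measure ?M {x} \<le> C" if "x \<in> ?I" for x
    using im_sub_fin(2)[OF assms(1,2)] that unfolding C_def by auto
  have chi_b: "norm (\<phi> x * measure ?M {x}) \<le> norm (\<bar>\<phi> x\<bar> * C)" if "x \<in> ?I" for x
    using mx[OF that] C0 by (simp add: abs_mult mult_left_mono)
  have chi_abs: "(\<lambda>x. \<bar>\<phi> x * measure ?M {x}\<bar>) summable_on ?I"
  proof -
    have "(\<lambda>x. norm (\<phi> x * measure ?M {x})) summable_on ?I"
      by (rule Infinite_Sum.abs_summable_on_comparison_test[OF _ chi_b])
        (use summable_on_cmult_left[OF ab, of C] in \<open>simp add: abs_mult C0\<close>)
    then show ?thesis by simp
  qed
  show chi: "(\<lambda>x. \<phi> x * measure ?M {x}) summable_on ?I"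
    using chi_abs summable_on_iff_abs_summable_on_real[of "\<lambda>x. \<phi> x * measure ?M {x}"] by simp
  have main: "\<exists>\<psi> c. (\<lambda>x. indicator ?I x * \<psi> x) \<in> borel_measurable borel \<and>
        (\<forall>x\<in>?I. \<bar>\<psi> x\<bar> \<le> c) \<and> (\<forall>x\<in>?I. \<bar>\<phi> x - \<psi> x\<bar> \<le> \<epsilon>) \<and>
        \<bar>(\<integral>x. indicator ?I x * \<psi> x \<partial>?M) - infsum (\<lambda>x. \<phi> x * measure ?M {x}) ?I\<bar> \<le> \<epsilon>"
    if e: "\<epsilon> > 0" for \<epsilon>
  proof -
    have e': "\<epsilon> / (C + 1) > 0" using e C0 by simp
    obtain A where A: "finite A" "A \<subseteq> ?I" "\<bar>infsum (\<lambda>x. \<bar>\<phi> x\<bar>) (?I - A)\<bar> < \<epsilon> / (C + 1)"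
      using tail_small[OF ab e'] by blast
    define \<psi> where "\<psi> x = \<phi> x * indicator A x" for x
    have psum: "\<psi> x = (\<Sum>u\<in>A. \<phi> u * indicator {u} x)" for x
      unfolding \<psi>_def using indicator_sum_singletons[OF A(1)] .
    have ind: "indicator ?I x * \<psi> x = \<psi> x" for x
      using A(2) unfolding \<psi>_def by (auto simp: indicator_def)
    have meas: "(\<lambda>x. indicator ?I x * \<psi> x) \<in> borel_measurable borel"
      unfolding ind psum by measurable
    have tailb: "infsum (\<lambda>x. \<bar>\<phi> x\<bar>) (?I - A) \<le> \<epsilon> / (C + 1)" using A(3) by simp
    have ab2: "(\<lambda>x. \<bar>\<phi> x\<bar>) summable_on (?I - A)"
      using summable_on_subset_banach[OF ab] by blast
    have close: "\<bar>\<phi> x - \<psi> x\<bar> \<le> \<epsilon>" if "x \<in> ?I" for x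
    proof (cases "x \<in> A")
      case True
      then show ?thesis using e unfolding \<psi>_def by simp
    next
      case False
      then have "\<bar>\<phi> x\<bar> \<le> infsum (\<lambda>x. \<bar>\<phi> x\<bar>) (?I - A)"
        using single_le_infsum[OF ab2] that by blast
      also have "\<dots> \<le> \<epsilon> / (C + 1)" by (rule tailb)
      also have "\<dots> \<le> \<epsilon>" using e C0 by (simp add: divide_le_eq)
      finally show ?thesis using False unfolding \<psi>_def by simp
    qed
    have bnd: "\<bar>\<psi> x\<bar> \<le> infsum (\<lambda>x. \<bar>\<phi> x\<bar>) ?I" if "x \<in> ?I" for x
      using single_le_infsum[OF ab that] unfolding \<psi>_def by (auto simp: indicator_def)
    have intpsi: "(\<integral>x. indicator ?I x * \<psi> x \<partial>?M) = (\<Sum>u\<in>A. \<phi> u * measure ?M {u})"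
    proof -
      have "(\<integral>x. indicator ?I x * \<psi> x \<partial>?M) = (\<integral>x. \<phi> x * indicator A x \<partial>?M)"
        unfolding ind by (simp add: \<psi>_def)
      also have "\<dots> = (\<Sum>u\<in>A. \<phi> u * measure ?M {u})"
      proof (rule integral_indicator_finite_real[OF A(1)])
        fix u assume "u \<in> A"
        then have "u \<in> ?I" using A(2) by auto
        then show "emeasure ?M {u} < \<infinity>" using im_sub_fin(1)[OF assms(1,2), of "{u}"] by auto
      qed auto
      finally show ?thesis .
    qed
    have "\<bar>infsum (\<lambda>x. \<phi> x * measure ?M {x}) ?I - (\<Sum>u\<in>A. \<phi> u * measure ?M {u})\<bar>
        = \<bar>infsum (\<lambda>x. \<phi> x * measure ?M {x}) (?I - A)\<bar>"
      using infsum_diff_finite[OF chi A(1,2)] by simp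
    also have "\<dots> \<le> infsum (\<lambda>x. \<bar>\<phi> x * measure ?M {x}\<bar>) (?I - A)"
      using infsum_abs_le[OF summable_on_subset_banach[OF chi Diff_subset] order_refl] .
    also have "\<dots> \<le> infsum (\<lambda>x. \<bar>\<phi> x\<bar> * C) (?I - A)"
      using chi_b summable_on_subset_banach[OF chi_abs Diff_subset]
        summable_on_cmult_left[OF ab2, of C]
      by (intro infsum_mono) (use C0 in auto)
    also have "\<dots> = infsum (\<lambda>x. \<bar>\<phi> x\<bar>) (?I - A) * C"
      using ab2 by (intro infsum_cmult_left) auto
    also have "\<dots> \<le> \<epsilon> / (C + 1) * C" using tailb C0 by (intro mult_right_mono) auto
    also have "\<dots> \<le> \<epsilon>" using e C0 by (simp add: field_simps)
    finally have "\<bar>(\<integral>x. indicator ?I x * \<psi> x \<partial>?M) - infsum (\<lambda>x. \<phi> x * measure ?M {x}) ?I\<bar> \<le> \<epsilon>"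
      unfolding intpsi by (simp add: abs_minus_commute)
    then show ?thesis using meas close bnd by blast
  qed
  show "integrable ?M (\<lambda>x. indicator ?I x * \<phi> x)"
    "(\<integral>x. indicator ?I x * \<phi> x \<partial>?M) = infsum (\<lambda>x. \<phi> x * measure ?M {x}) ?I"
    using approx_integral[OF assms(1,2) main] by auto
qed

lemma atom_limit:
  assumes "goodF F"
  shows "(\<lambda>n. F s - F (s - inverse (real (Suc n)))) \<longlonglongrightarrow> measure (interval_measure F) {s}"
proof -
  let ?M = "interval_measure F"
  define A where "A n = {s - inverse (real (Suc n))<..s}" for n
  have le: "s - inverse (real (Suc n)) \<le> s" for n by simp
  have em: "emeasure ?M (A n) = ennreal (F s - F (s - inverse (real (Suc n))))" for n
    unfolding A_def using im_Ioc(1)[OF assms le] .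
  have dec: "decseq A"
    unfolding decseq_def A_def
  proof (intro allI impI subsetI)
    fix m n :: nat and x assume "m \<le> n" "x \<in> {s - inverse (real (Suc n))<..s}"
    moreover have "inverse (real (Suc n)) \<le> inverse (real (Suc m))"
      using \<open>m \<le> n\<close> by (simp add: le_imp_inverse_le)
    moreover have "s - inverse (real (Suc n)) < x" "x \<le> s" using \<open>x \<in> {s - inverse (real (Suc n))<..s}\<close>
      by (simp_all only: greaterThanAtMost_iff)
    ultimately have "s - inverse (real (Suc m)) < x \<and> x \<le> s"
      by linarith
    then show "x \<in> {s - inverse (real (Suc m))<..s}" by (simp only: greaterThanAtMost_iff)
  qed
  have inter: "(\<Inter>n. A n) = {s}"
  proof (intro equalityI subsetI)
    fix x assume x: "x \<in> (\<Inter>n. A n)"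
    then have "x \<le> s" unfolding A_def by auto
    moreover have "\<not> x < s"
    proof
      assume "x < s"
      then obtain n where "inverse (real (Suc n)) < s - x"
        using reals_Archimedean[of "s - x"] by auto
      moreover have "x \<in> A n" using x by blast
      ultimately show False unfolding A_def by (simp only: greaterThanAtMost_iff) linarith
    qed
    ultimately show "x \<in> {s}" by simp
  qed (auto simp: A_def)
  have "(\<lambda>n. emeasure ?M (A n)) \<longlonglongrightarrow> emeasure ?M (\<Inter>n. A n)"
  proof (rule Lim_emeasure_decseq[OF _ dec])
    show "range A \<subseteq> sets ?M" by (auto simp: A_def)
    show "emeasure ?M (A n) \<noteq> \<infinity>" for n using em[of n] by simp
  qed
  then have "(\<lambda>n. ennreal (F s - F (s - inverse (real (Suc n))))) \<longlonglongrightarrow> ennreal (measure ?M {s})"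
    unfolding em inter
    using im_sub_fin(1)[OF assms le[of 0], of "{s}"] emeasure_eq_ennreal_measure[of ?M "{s}"] by auto
  then show ?thesis
    using assms unfolding goodF_def by (intro tendsto_ennrealD) auto
qed

definition xk :: "real \<Rightarrow> nat \<Rightarrow> nat \<Rightarrow> real" where
  "xk t n k = t * real k / 2 ^ n"

definition Rs :: "(real \<Rightarrow> real) \<Rightarrow> real \<Rightarrow> nat \<Rightarrow> real \<Rightarrow> real" where
  "Rs m t n x = (\<Sum>k<2 ^ n. m (xk t n (Suc k)) * indicator {xk t n k<..xk t n (Suc k)} x)"

definition Ls :: "(real \<Rightarrow> real) \<Rightarrow> real \<Rightarrow> nat \<Rightarrow> real \<Rightarrow> real" where
  "Ls m t n x = (\<Sum>k<2 ^ n. m (xk t n k) * indicator {xk t n k<..xk t n (Suc k)} x)"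

definition cq :: "real \<Rightarrow> nat \<Rightarrow> real \<Rightarrow> int" where
  "cq t n x = \<lceil>x * 2 ^ n / t\<rceil>"

definition rp :: "real \<Rightarrow> nat \<Rightarrow> real \<Rightarrow> real" where
  "rp t n x = t * of_int (cq t n x) / 2 ^ n"

lemma xk_mono: "0 \<le> t \<Longrightarrow> xk t n k \<le> xk t n (Suc k)"
  unfolding xk_def by (intro divide_right_mono mult_left_mono) auto

lemma loc:
  assumes "t > 0"
  shows "(x \<in> {xk t n k<..xk t n (Suc k)}) \<longleftrightarrow> (cq t n x = int k + 1)"
proof -
  have p: "(0::real) < 2 ^ n" by simp
  have "x \<in> {xk t n k<..xk t n (Suc k)} \<longleftrightarrow> real k < x * 2 ^ n / t \<and> x * 2 ^ n / t \<le> real k + 1"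
    unfolding xk_def using assms p by (auto simp: field_simps)
  also have "\<dots> \<longleftrightarrow> cq t n x = int k + 1"
    unfolding cq_def ceiling_eq_iff by simp
  finally show ?thesis .
qed

lemma cq_range:
  assumes "t > 0" "x \<in> {0<..t}"
  shows "1 \<le> cq t n x" "cq t n x \<le> 2 ^ n"
proof -
  have q: "0 < x * 2 ^ n / t" "x * 2 ^ n / t \<le> 2 ^ n"
    using assms by (auto simp: field_simps)
  show "1 \<le> cq t n x" unfolding cq_def using q(1) by (simp add: le_ceiling_iff)
  show "cq t n x \<le> 2 ^ n" unfolding cq_def using q(2) by (simp add: ceiling_le_iff)
qed

lemma rp_bounds:
  assumes "t > 0" "x \<in> {0<..t}"
  shows "x \<le> rp t n x" "rp t n x < x + t / 2 ^ n" "rp t n x \<le> t" "0 \<le> rp t n x - t / 2 ^ n"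
proof -
  have c: "x * 2 ^ n / t \<le> of_int (cq t n x)" "of_int (cq t n x) < x * 2 ^ n / t + 1"
    unfolding cq_def using ceiling_correct[of "x * 2 ^ n / t"] by auto
  have r2: "real_of_int (cq t n x) \<le> real_of_int (2 ^ n)"
    using cq_range(2)[OF assms, of n] by (simp only: of_int_le_iff)
  have r: "1 \<le> real_of_int (cq t n x)" "real_of_int (cq t n x) \<le> 2 ^ n"
    using cq_range(1)[OF assms, of n] r2 by simp_all
  have p: "(0::real) < 2 ^ n" by simp
  show "x \<le> rp t n x" unfolding rp_def using c(1) assms(1) p by (simp add: field_simps)
  show "rp t n x < x + t / 2 ^ n" unfolding rp_def using c(2) assms(1) p by (simp add: field_simps)
  show "rp t n x \<le> t" unfolding rp_def using r(2) assms(1) p by (simp add: field_simps)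
  show "0 \<le> rp t n x - t / 2 ^ n" unfolding rp_def using r(1) assms(1) p by (simp add: field_simps)
qed

lemma step_eval:
  assumes "t > 0" "x \<in> {0<..t}"
  shows "Rs m t n x = m (rp t n x)" "Ls m t n x = m (rp t n x - t / 2 ^ n)"
proof -
  define k0 where "k0 = nat (cq t n x) - 1"
  have r: "1 \<le> cq t n x" "cq t n x \<le> 2 ^ n" using cq_range[OF assms] by auto
  have N1: "nat (cq t n x) \<le> 2 ^ n" using r(2) by (simp add: nat_le_iff)
  have N2: "1 \<le> nat (cq t n x)" using r(1) by simp
  have "nat (cq t n x) - 1 < nat (cq t n x)" using N2 by simp
  then have k0a: "k0 < 2 ^ n" unfolding k0_def using N1 by (rule order.strict_trans2)
  have k0: "k0 < 2 ^ n" "int k0 + 1 = cq t n x" using k0a unfolding k0_def using r N2 by auto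
  have ind: "indicator {xk t n k<..xk t n (Suc k)} x = (if k = k0 then 1 else 0 :: real)" for k
    using loc[OF assms(1), of x n k] k0(2) by (auto simp: indicator_def)
  have e: "real_of_int (cq t n x) = real k0 + 1" using k0(2) by linarith
  have x1: "xk t n (Suc k0) = rp t n x" unfolding xk_def rp_def e by simp
  have x0: "xk t n k0 = rp t n x - t / 2 ^ n"
    unfolding xk_def rp_def e by (simp add: field_simps)
  show "Rs m t n x = m (rp t n x)"
    unfolding Rs_def ind using k0(1) x1 by (simp add: sum.delta' if_distrib[of "\<lambda>v. _ * v"] cong: if_cong)
  show "Ls m t n x = m (rp t n x - t / 2 ^ n)"
    unfolding Ls_def ind using k0(1) x0 by (simp add: sum.delta' if_distrib[of "\<lambda>v. _ * v"] cong: if_cong)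
qed

lemma step_out:
  assumes "t > 0" "x \<notin> {0<..t}"
  shows "Rs m t n x = 0" "Ls m t n x = 0"
proof -
  have "indicator {xk t n k<..xk t n (Suc k)} x = (0::real)" if "k < 2 ^ n" for k
  proof -
    have "Suc k \<le> 2 ^ n" using that by simp
    then have "real (Suc k) \<le> real (2 ^ n)" by (simp only: of_nat_le_iff)
    then have "real (Suc k) \<le> 2 ^ n" by simp
    then have "t * real (Suc k) / 2 ^ n \<le> t * 2 ^ n / 2 ^ n" using assms(1)
      by (intro divide_right_mono mult_left_mono) auto
    then have "xk t n (Suc k) \<le> t" unfolding xk_def by simp
    moreover have "0 \<le> xk t n k" unfolding xk_def using assms(1) by simp
    ultimately show ?thesis using assms(2) by (auto simp: indicator_def)
  qed
  then show "Rs m t n x = 0" "Ls m t n x = 0" unfolding Rs_def Ls_def by simp_all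
qed

lemma step_integral:
  assumes "goodF F" "t > 0"
  shows "integrable (interval_measure F) (Rs m t n)" "integrable (interval_measure F) (Ls m t n)"
    "(\<integral>x. Rs m t n x \<partial>interval_measure F) = (\<Sum>k<2 ^ n. m (xk t n (Suc k)) * (F (xk t n (Suc k)) - F (xk t n k)))"
    "(\<integral>x. Ls m t n x \<partial>interval_measure F) = (\<Sum>k<2 ^ n. m (xk t n k) * (F (xk t n (Suc k)) - F (xk t n k)))"
proof -
  let ?M = "interval_measure F"
  have ii: "integrable ?M (\<lambda>x. (c::real) * indicator {xk t n k<..xk t n (Suc k)} x)" for c k
  proof -
    have "emeasure ?M {xk t n k<..xk t n (Suc k)} = ennreal (F (xk t n (Suc k)) - F (xk t n k))"
      using im_Ioc(1)[OF assms(1) xk_mono, of t n k] assms(2) by simp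
    then show ?thesis by (intro integrable_mult_right integrable_real_indicator) auto
  qed
  have iv: "(\<integral>x. (c::real) * indicator {xk t n k<..xk t n (Suc k)} x \<partial>?M) = c * (F (xk t n (Suc k)) - F (xk t n k))" for c k
  proof -
    have "measure ?M {xk t n k<..xk t n (Suc k)} = F (xk t n (Suc k)) - F (xk t n k)"
      using im_Ioc(2)[OF assms(1) xk_mono, of t n k] assms(2) by simp
    then show ?thesis by simp
  qed
  show "integrable ?M (Rs m t n)"
    unfolding Rs_def by (intro Bochner_Integration.integrable_sum ii)
  show "integrable ?M (Ls m t n)"
    unfolding Ls_def by (intro Bochner_Integration.integrable_sum ii)
  show "(\<integral>x. Rs m t n x \<partial>?M) = (\<Sum>k<2 ^ n. m (xk t n (Suc k)) * (F (xk t n (Suc k)) - F (xk t n k)))"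
  proof -
    have "(\<integral>x. (\<Sum>k<2 ^ n. m (xk t n (Suc k)) * indicator {xk t n k<..xk t n (Suc k)} x) \<partial>?M)
       = (\<Sum>k<2 ^ n. (\<integral>x. m (xk t n (Suc k)) * indicator {xk t n k<..xk t n (Suc k)} x \<partial>?M))"
      by (rule Bochner_Integration.integral_sum[where f="\<lambda>k x. m (xk t n (Suc k)) * indicator {xk t n k<..xk t n (Suc k)} x"]) (rule ii)
    also have "\<dots> = (\<Sum>k<2 ^ n. m (xk t n (Suc k)) * (F (xk t n (Suc k)) - F (xk t n k)))"
      by (rule sum.cong[OF refl iv])
    finally show ?thesis unfolding Rs_def .
  qed
  show "(\<integral>x. Ls m t n x \<partial>?M) = (\<Sum>k<2 ^ n. m (xk t n k) * (F (xk t n (Suc k)) - F (xk t n k)))"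
  proof -
    have "(\<integral>x. (\<Sum>k<2 ^ n. m (xk t n k) * indicator {xk t n k<..xk t n (Suc k)} x) \<partial>?M)
       = (\<Sum>k<2 ^ n. (\<integral>x. m (xk t n k) * indicator {xk t n k<..xk t n (Suc k)} x \<partial>?M))"
      by (rule Bochner_Integration.integral_sum[where f="\<lambda>k x. m (xk t n k) * indicator {xk t n k<..xk t n (Suc k)} x"]) (rule ii)
    also have "\<dots> = (\<Sum>k<2 ^ n. m (xk t n k) * (F (xk t n (Suc k)) - F (xk t n k)))"
      by (rule sum.cong[OF refl iv])
    finally show ?thesis unfolding Ls_def .
  qed
qed

lemma step_meas: "Rs m t n \<in> borel_measurable borel" "Ls m t n \<in> borel_measurable borel"
  unfolding Rs_def Ls_def by measurable

lemma pow_lim: "(\<lambda>n. t / 2 ^ n :: real) \<longlonglongrightarrow> 0"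
proof -
  have "(\<lambda>n. t * (1 / 2) ^ n :: real) \<longlonglongrightarrow> t * 0"
    by (intro tendsto_mult tendsto_const LIMSEQ_realpow_zero) auto
  then show ?thesis by (simp add: power_one_over)
qed

lemma Rs_lim:
  assumes "t > 0" "x \<in> {0<..t}" "x < t \<Longrightarrow> (m \<longlongrightarrow> m x) (at_right x)"
  shows "(\<lambda>n. Rs m t n x) \<longlonglongrightarrow> m x"
proof (cases "x = t")
  case True
  have "rp t n x = t" for n using rp_bounds[OF assms(1,2), of n] True by simp
  then show ?thesis using step_eval(1)[OF assms(1,2)] True by simp
next
  case False
  then have xt: "x < t" using assms(2) by simp
  show ?thesis
  proof (rule tendstoI)
    fix \<epsilon> :: real assume e: "\<epsilon> > 0"
    obtain b where b: "b > x" "\<And>y. x < y \<Longrightarrow> y < b \<Longrightarrow> dist (m y) (m x) < \<epsilon>"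
      using tendstoD[OF assms(3)[OF xt] e] unfolding eventually_at_right_field by blast
    have "eventually (\<lambda>n. t / 2 ^ n < b - x) sequentially"
      using order_tendstoD(2)[OF pow_lim, of "b - x" t] b(1) by simp
    then show "eventually (\<lambda>n. dist (Rs m t n x) (m x) < \<epsilon>) sequentially"
    proof (rule eventually_mono)
      fix n assume n: "t / 2 ^ n < b - x"
      have "x \<le> rp t n x" "rp t n x < b" using rp_bounds[OF assms(1,2), of n] n by auto
      then show "dist (Rs m t n x) (m x) < \<epsilon>"
        unfolding step_eval(1)[OF assms(1,2)] using b(2)[of "rp t n x"] e
        by (cases "x = rp t n x") auto
    qed
  qed
qed

lemma Ls_lim:
  assumes "t > 0" "x \<in> {0<..t}" "(m \<longlongrightarrow> ml) (at_left x)"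
  shows "(\<lambda>n. Ls m t n x) \<longlonglongrightarrow> ml"
proof -
  have lim: "(\<lambda>n. rp t n x - t / 2 ^ n) \<longlonglongrightarrow> x"
  proof -
    have "(\<lambda>n. (rp t n x - t / 2 ^ n) - x) \<longlonglongrightarrow> 0"
    proof (rule Lim_null_comparison[OF _ pow_lim[of t]])
      show "eventually (\<lambda>n. norm (rp t n x - t / 2 ^ n - x) \<le> t / 2 ^ n) sequentially"
      proof (intro always_eventually allI)
        fix n
        have "x \<le> rp t n x" "rp t n x < x + t / 2 ^ n" "0 \<le> t / 2 ^ n"
          using rp_bounds[OF assms(1,2), of n] assms(1) by auto
        then show "norm (rp t n x - t / 2 ^ n - x) \<le> t / 2 ^ n"
          unfolding real_norm_def abs_le_iff by linarith
      qed
    qed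
    then have "(\<lambda>n. (rp t n x - t / 2 ^ n - x) + x) \<longlonglongrightarrow> 0 + x" by (intro tendsto_add) auto
    then show ?thesis by simp
  qed
  have "filterlim (\<lambda>n. rp t n x - t / 2 ^ n) (at_left x) sequentially"
  proof (rule tendsto_imp_filterlim_at_left[OF lim])
    show "eventually (\<lambda>n. rp t n x - t / 2 ^ n < x) sequentially"
    proof (intro always_eventually allI)
      fix n
      have "rp t n x < x + t / 2 ^ n" using rp_bounds[OF assms(1,2), of n] by auto
      then show "rp t n x - t / 2 ^ n < x" by linarith
    qed
  qed
  from filterlim_compose[OF assms(3) this]
  show ?thesis unfolding step_eval(2)[OF assms(1,2)] .
qed

lemma xk_facts:
  assumes "t > 0"
  shows "0 \<le> xk t n k" "k < 2 ^ n \<Longrightarrow> xk t n (Suc k) \<le> t" "xk t n (2 ^ n) = t" "xk t n 0 = 0"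
proof -
  show "0 \<le> xk t n k" unfolding xk_def using assms by simp
  show "xk t n (Suc k) \<le> t" if "k < 2 ^ n"
  proof -
    have "Suc k \<le> 2 ^ n" using that by simp
    then have "real (Suc k) \<le> real (2 ^ n)" by (simp only: of_nat_le_iff)
    then have "real (Suc k) \<le> 2 ^ n" by simp
    then have "t * real (Suc k) / 2 ^ n \<le> t * 2 ^ n / 2 ^ n" using assms
      by (intro divide_right_mono mult_left_mono) auto
    then show ?thesis unfolding xk_def by simp
  qed
  show "xk t n (2 ^ n) = t" unfolding xk_def by simp
  show "xk t n 0 = 0" unfolding xk_def by simp
qed

lemma dc_one:
  fixes m ml :: "real \<Rightarrow> real"
  assumes gF: "goodF F" and t: "t > 0"
    and bd: "\<And>x. 0 \<le> x \<Longrightarrow> x \<le> t \<Longrightarrow> \<bar>m x\<bar> \<le> B"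
    and rc: "\<And>s. 0 \<le> s \<Longrightarrow> s < t \<Longrightarrow> (m \<longlongrightarrow> m s) (at_right s)"
    and lc: "\<And>s. 0 < s \<Longrightarrow> s \<le> t \<Longrightarrow> (m \<longlongrightarrow> ml s) (at_left s)"
  shows "integrable (interval_measure F) (\<lambda>x. indicator {0<..t} x * m x)"
    "(\<lambda>n. \<integral>x. Rs m t n x \<partial>interval_measure F) \<longlonglongrightarrow> (\<integral>x. indicator {0<..t} x * m x \<partial>interval_measure F)"
    "integrable (interval_measure F) (\<lambda>x. indicator {0<..t} x * ml x)"
    "(\<lambda>n. \<integral>x. Ls m t n x \<partial>interval_measure F) \<longlonglongrightarrow> (\<integral>x. indicator {0<..t} x * ml x \<partial>interval_measure F)"
proof -
  let ?M = "interval_measure F" and ?I = "{0<..t}"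
  have B0: "0 \<le> B" using bd[of 0] t by linarith
  have w: "integrable ?M (\<lambda>x. B * indicator ?I x)"
    using im_Ioc(1)[OF gF, of 0 t] t by (intro integrable_mult_right integrable_real_indicator) auto
  have limR: "(\<lambda>n. Rs m t n x) \<longlonglongrightarrow> indicator ?I x * m x" for x
  proof (cases "x \<in> ?I")
    case True
    then show ?thesis using Rs_lim[OF t True] rc[of x] by simp
  next
    case False
    then show ?thesis using step_out[OF t False] by simp
  qed
  have limL: "(\<lambda>n. Ls m t n x) \<longlonglongrightarrow> indicator ?I x * ml x" for x
  proof (cases "x \<in> ?I")
    case True
    then show ?thesis using Ls_lim[OF t True lc[of x]] by simp
  next
    case False
    then show ?thesis using step_out[OF t False] by simp
  qed
  have mR: "(\<lambda>x. indicator ?I x * m x) \<in> borel_measurable ?M"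
    by (rule meas_conv, rule borel_measurable_LIMSEQ_real[OF limR step_meas(1)])
  have mL: "(\<lambda>x. indicator ?I x * ml x) \<in> borel_measurable ?M"
    by (rule meas_conv, rule borel_measurable_LIMSEQ_real[OF limL step_meas(2)])
  have bR: "norm (Rs m t n x) \<le> B * indicator ?I x" for n x
  proof (cases "x \<in> ?I")
    case True
    have "0 \<le> rp t n x" "rp t n x \<le> t" using rp_bounds[OF t True, of n] True by auto
    then show ?thesis using step_eval(1)[OF t True] bd True by simp
  next
    case False
    then show ?thesis using step_out[OF t False] by simp
  qed
  have bL: "norm (Ls m t n x) \<le> B * indicator ?I x" for n x
  proof (cases "x \<in> ?I")
    case True
    have "0 \<le> rp t n x - t / 2 ^ n" "rp t n x - t / 2 ^ n \<le> t"
      using rp_bounds[OF t True, of n] t by auto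
    then show ?thesis using step_eval(2)[OF t True] bd True by simp
  next
    case False
    then show ?thesis using step_out[OF t False] by simp
  qed
  show "integrable ?M (\<lambda>x. indicator ?I x * m x)"
    "(\<lambda>n. \<integral>x. Rs m t n x \<partial>?M) \<longlonglongrightarrow> (\<integral>x. indicator ?I x * m x \<partial>?M)"
  proof -
    have s: "\<And>n. Rs m t n \<in> borel_measurable ?M" using meas_conv[OF step_meas(1)] .
    have l: "AE x in ?M. (\<lambda>n. Rs m t n x) \<longlonglongrightarrow> indicator ?I x * m x"
      using limR by simp
    have bb: "\<And>n. AE x in ?M. norm (Rs m t n x) \<le> B * indicator ?I x"
      using bR by simp
    show "integrable ?M (\<lambda>x. indicator ?I x * m x)"
      by (rule integrable_dominated_convergence[where s="\<lambda>n. Rs m t n", OF mR s w l bb])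
    show "(\<lambda>n. \<integral>x. Rs m t n x \<partial>?M) \<longlonglongrightarrow> (\<integral>x. indicator ?I x * m x \<partial>?M)"
      by (rule integral_dominated_convergence[where s="\<lambda>n. Rs m t n", OF mR s w l bb])
  qed
  show "integrable ?M (\<lambda>x. indicator ?I x * ml x)"
    "(\<lambda>n. \<integral>x. Ls m t n x \<partial>?M) \<longlonglongrightarrow> (\<integral>x. indicator ?I x * ml x \<partial>?M)"
  proof -
    have s: "\<And>n. Ls m t n \<in> borel_measurable ?M" using meas_conv[OF step_meas(2)] .
    have l: "AE x in ?M. (\<lambda>n. Ls m t n x) \<longlonglongrightarrow> indicator ?I x * ml x"
      using limL by simp
    have bb: "\<And>n. AE x in ?M. norm (Ls m t n x) \<le> B * indicator ?I x"
      using bL by simp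
    show "integrable ?M (\<lambda>x. indicator ?I x * ml x)"
      by (rule integrable_dominated_convergence[where s="\<lambda>n. Ls m t n", OF mL s w l bb])
    show "(\<lambda>n. \<integral>x. Ls m t n x \<partial>?M) \<longlonglongrightarrow> (\<integral>x. indicator ?I x * ml x \<partial>?M)"
      by (rule integral_dominated_convergence[where s="\<lambda>n. Ls m t n", OF mL s w l bb])
  qed
qed

lemma step_conv:
  fixes m ml :: "real \<Rightarrow> real"
  assumes g1: "goodF F1" and g2: "goodF F2" and t: "t > 0"
    and diff: "\<And>a b. 0 \<le> a \<Longrightarrow> a \<le> b \<Longrightarrow> b \<le> t \<Longrightarrow> (F1 b - F1 a) - (F2 b - F2 a) = m b - m a"
    and bd: "\<And>x. 0 \<le> x \<Longrightarrow> x \<le> t \<Longrightarrow> \<bar>m x\<bar> \<le> B"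
    and rc: "\<And>s. 0 \<le> s \<Longrightarrow> s < t \<Longrightarrow> (m \<longlongrightarrow> m s) (at_right s)"
    and lc: "\<And>s. 0 < s \<Longrightarrow> s \<le> t \<Longrightarrow> (m \<longlongrightarrow> ml s) (at_left s)"
  shows "integrable (interval_measure F1) (\<lambda>x. indicator {0<..t} x * m x)"
    "integrable (interval_measure F2) (\<lambda>x. indicator {0<..t} x * m x)"
    "integrable (interval_measure F1) (\<lambda>x. indicator {0<..t} x * ml x)"
    "integrable (interval_measure F2) (\<lambda>x. indicator {0<..t} x * ml x)"
    "((\<integral>x. indicator {0<..t} x * m x \<partial>interval_measure F1) - (\<integral>x. indicator {0<..t} x * m x \<partial>interval_measure F2))
     + ((\<integral>x. indicator {0<..t} x * ml x \<partial>interval_measure F1) - (\<integral>x. indicator {0<..t} x * ml x \<partial>interval_measure F2))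
     = (m t)\<^sup>2 - (m 0)\<^sup>2"
proof -
  note d1 = dc_one[OF g1 t bd rc lc] and d2 = dc_one[OF g2 t bd rc lc]
  show "integrable (interval_measure F1) (\<lambda>x. indicator {0<..t} x * m x)"
    "integrable (interval_measure F2) (\<lambda>x. indicator {0<..t} x * m x)"
    "integrable (interval_measure F1) (\<lambda>x. indicator {0<..t} x * ml x)"
    "integrable (interval_measure F2) (\<lambda>x. indicator {0<..t} x * ml x)"
    using d1 d2 by auto
  let ?a = "\<lambda>n. ((\<integral>x. Rs m t n x \<partial>interval_measure F1) - (\<integral>x. Rs m t n x \<partial>interval_measure F2))
     + ((\<integral>x. Ls m t n x \<partial>interval_measure F1) - (\<integral>x. Ls m t n x \<partial>interval_measure F2))"
  have lim: "?a \<longlonglongrightarrow> ((\<integral>x. indicator {0<..t} x * m x \<partial>interval_measure F1) - (\<integral>x. indicator {0<..t} x * m x \<partial>interval_measure F2))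
     + ((\<integral>x. indicator {0<..t} x * ml x \<partial>interval_measure F1) - (\<integral>x. indicator {0<..t} x * ml x \<partial>interval_measure F2))"
    by (intro tendsto_add tendsto_diff d1(2) d1(4) d2(2) d2(4))
  have const: "?a n = (m t)\<^sup>2 - (m 0)\<^sup>2" for n
  proof -
    let ?x = "xk t n"
    have dk: "(F1 (?x (Suc k)) - F1 (?x k)) - (F2 (?x (Suc k)) - F2 (?x k)) = m (?x (Suc k)) - m (?x k)"
      if "k < 2 ^ n" for k
      using diff[of "?x k" "?x (Suc k)"] xk_facts[OF t] xk_mono[of t n k] t that by auto
    have "?a n = (\<Sum>k<2 ^ n. m (?x (Suc k)) * (F1 (?x (Suc k)) - F1 (?x k)))
        - (\<Sum>k<2 ^ n. m (?x (Suc k)) * (F2 (?x (Suc k)) - F2 (?x k)))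
        + ((\<Sum>k<2 ^ n. m (?x k) * (F1 (?x (Suc k)) - F1 (?x k)))
        - (\<Sum>k<2 ^ n. m (?x k) * (F2 (?x (Suc k)) - F2 (?x k))))"
      using step_integral[OF g1 t] step_integral[OF g2 t] by simp
    also have "\<dots> = (\<Sum>k<2 ^ n. (m (?x (Suc k)) + m (?x k)) *
        ((F1 (?x (Suc k)) - F1 (?x k)) - (F2 (?x (Suc k)) - F2 (?x k))))"
      by (simp add: sum_subtractf[symmetric] sum.distrib[symmetric] algebra_simps)
    also have "\<dots> = (\<Sum>k<2 ^ n. (m (?x (Suc k)) + m (?x k)) * (m (?x (Suc k)) - m (?x k)))"
      by (intro sum.cong refl) (simp add: dk)
    also have "\<dots> = (\<Sum>k<2 ^ n. (m (?x (Suc k)))\<^sup>2 - (m (?x k))\<^sup>2)"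
      by (intro sum.cong refl) (simp add: power2_eq_square algebra_simps)
    also have "\<dots> = (m t)\<^sup>2 - (m 0)\<^sup>2"
      using sum_lessThan_telescope[of "\<lambda>k. (m (?x k))\<^sup>2" "2 ^ n"] xk_facts(3,4)[OF t] by simp
    finally show ?thesis .
  qed
  show "((\<integral>x. indicator {0<..t} x * m x \<partial>interval_measure F1) - (\<integral>x. indicator {0<..t} x * m x \<partial>interval_measure F2))
     + ((\<integral>x. indicator {0<..t} x * ml x \<partial>interval_measure F1) - (\<integral>x. indicator {0<..t} x * ml x \<partial>interval_measure F2))
     = (m t)\<^sup>2 - (m 0)\<^sup>2"
    using LIMSEQ_unique[OF lim] const by simp
qed

lemma infsum_diff2:
  fixes a b :: "'a \<Rightarrow> real"
  assumes "a summable_on A" "b summable_on A"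
  shows "infsum (\<lambda>x. a x - b x) A = infsum a A - infsum b A"
proof -
  have nb: "(\<lambda>x. - b x) summable_on A" using assms(2) by (simp add: summable_on_uminus)
  have "infsum (\<lambda>x. a x + - b x) A = infsum a A + infsum (\<lambda>x. - b x) A"
    by (rule infsum_add[OF assms(1) nb])
  then show ?thesis by (simp add: infsum_uminus)
qed

lemma summable_diff2:
  fixes a b :: "'a \<Rightarrow> real"
  assumes "a summable_on A" "b summable_on A"
  shows "(\<lambda>x. a x - b x) summable_on A"
  using summable_on_add[OF assms(1) summable_on_uminus[THEN iffD2, OF assms(2)]] by simp

lemma bounded_mult_summable:
  fixes \<phi> c :: "'a \<Rightarrow> real"
  assumes "\<phi> summable_on A" "\<And>x. x \<in> A \<Longrightarrow> \<bar>c x\<bar> \<le> K"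
  shows "(\<lambda>x. c x * \<phi> x) summable_on A" "(\<lambda>x. \<phi> x * c x) summable_on A"
proof -
  have g: "(\<lambda>x. \<phi> x * K) summable_on A" by (rule summable_on_cmult_left[OF assms(1)])
  then have ga: "(\<lambda>x. norm (\<phi> x * K)) summable_on A"
    using summable_on_iff_abs_summable_on_real[of "\<lambda>x. \<phi> x * K" A] by simp
  have "(\<lambda>x. norm (c x * \<phi> x)) summable_on A"
  proof (rule Infinite_Sum.abs_summable_on_comparison_test[OF ga])
    fix x assume "x \<in> A"
    then have "\<bar>c x\<bar> * \<bar>\<phi> x\<bar> \<le> K * \<bar>\<phi> x\<bar>" using assms(2) by (intro mult_right_mono) auto
    also have "\<dots> \<le> \<bar>K\<bar> * \<bar>\<phi> x\<bar>" by (intro mult_right_mono) auto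
    finally show "norm (c x * \<phi> x) \<le> norm (\<phi> x * K)" by (simp add: abs_mult mult.commute)
  qed
  then show "(\<lambda>x. c x * \<phi> x) summable_on A"
    using summable_on_iff_abs_summable_on_real[of "\<lambda>x. c x * \<phi> x" A] by simp
  then show "(\<lambda>x. \<phi> x * c x) summable_on A" by (simp add: mult.commute)
qed

lemma sum_le_infsum_abs:
  fixes \<phi> :: "'a \<Rightarrow> real"
  assumes "(\<lambda>x. \<bar>\<phi> x\<bar>) summable_on S" "finite A" "A \<subseteq> S"
  shows "\<bar>sum \<phi> A\<bar> \<le> infsum (\<lambda>x. \<bar>\<phi> x\<bar>) S"
proof -
  have "\<bar>sum \<phi> A\<bar> \<le> sum (\<lambda>x. \<bar>\<phi> x\<bar>) A" by (rule sum_abs)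
  also have "\<dots> = infsum (\<lambda>x. \<bar>\<phi> x\<bar>) A" using assms(2) by simp
  also have "\<dots> \<le> infsum (\<lambda>x. \<bar>\<phi> x\<bar>) S"
    using assms by (intro infsum_mono2) auto
  finally show ?thesis .
qed

lemma J_integral:
  assumes R: "regulated_path f" and B: "bv_path f" and gF: "goodF F" and t: "t > 0"
  shows "integrable (interval_measure F) (\<lambda>x. indicator {0<..t} x * Jf f x)"
    "(\<integral>x. indicator {0<..t} x * Jf f x \<partial>interval_measure F) = infsum (\<lambda>u. dj f u * (F t - F u)) {0..<t}"
proof -
  let ?S = "{0..<t}" and ?I = "{0<..t}" and ?M = "interval_measure F"
  define C where "C = F t - F 0"
  have monoF: "F x \<le> F y" if "x \<le> y" for x y using gF that unfolding goodF_def by auto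
  have C0: "0 \<le> C" unfolding C_def using monoF t by simp
  have dS: "dj f summable_on ?S" using dj_summable[OF R B] .
  have abS: "(\<lambda>u. \<bar>dj f u\<bar>) summable_on ?S" using dj_abs_summable[OF R B] .
  have hF: "\<bar>F t - F u\<bar> \<le> C" if "u \<in> ?S" for u
    using monoF[of 0 u] monoF[of u t] that unfolding C_def by auto
  have Tsum: "(\<lambda>u. dj f u * (F t - F u)) summable_on ?S"
    using bounded_mult_summable(2)[OF dS hF] .
  have Tabs: "(\<lambda>u. \<bar>dj f u * (F t - F u)\<bar>) summable_on ?S"
    using Tsum summable_on_iff_abs_summable_on_real[of "\<lambda>u. dj f u * (F t - F u)"] by simp
  have main: "\<exists>\<psi> c. (\<lambda>x. indicator ?I x * \<psi> x) \<in> borel_measurable borel \<and>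
        (\<forall>x\<in>?I. \<bar>\<psi> x\<bar> \<le> c) \<and> (\<forall>x\<in>?I. \<bar>Jf f x - \<psi> x\<bar> \<le> \<epsilon>) \<and>
        \<bar>(\<integral>x. indicator ?I x * \<psi> x \<partial>?M) - infsum (\<lambda>u. dj f u * (F t - F u)) ?S\<bar> \<le> \<epsilon>"
    if e: "\<epsilon> > 0" for \<epsilon>
  proof -
    have e': "\<epsilon> / (C + 1) > 0" using e C0 by simp
    obtain A where A: "finite A" "A \<subseteq> ?S" "\<bar>infsum (\<lambda>u. \<bar>dj f u\<bar>) (?S - A)\<bar> < \<epsilon> / (C + 1)"
      using tail_small[OF abS e'] by blast
    define \<tau> where "\<tau> = infsum (\<lambda>u. \<bar>dj f u\<bar>) (?S - A)"
    have \<tau>: "0 \<le> \<tau>" "\<tau> \<le> \<epsilon> / (C + 1)" unfolding \<tau>_def using A(3) by (auto intro: infsum_nonneg)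
    have "\<epsilon> / (C + 1) \<le> \<epsilon>" using e C0 by (simp add: divide_le_eq)
    then have \<tau>e: "\<tau> \<le> \<epsilon>" using \<tau> by linarith
    have abSA: "(\<lambda>u. \<bar>dj f u\<bar>) summable_on (?S - A)" using summable_on_subset_banach[OF abS Diff_subset] .
    define \<psi> where "\<psi> x = (\<Sum>u\<in>A. dj f u * indicator {u<..t} x)" for x
    have meas: "(\<lambda>x. indicator ?I x * \<psi> x) \<in> borel_measurable borel"
      unfolding \<psi>_def by measurable
    have bnd: "\<bar>\<psi> x\<bar> \<le> (\<Sum>u\<in>A. \<bar>dj f u\<bar>)" for x
      unfolding \<psi>_def by (rule order_trans[OF sum_abs]) (auto intro!: sum_mono simp: abs_mult indicator_def)
    have close: "\<bar>Jf f x - \<psi> x\<bar> \<le> \<epsilon>" if x: "x \<in> ?I" for x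
    proof -
      have "\<psi> x = (\<Sum>u\<in>A. if u < x then dj f u else 0)"
        unfolding \<psi>_def using x A(2) by (intro sum.cong refl) (auto simp: indicator_def)
      also have "\<dots> = sum (dj f) {u\<in>A. u < x}" using A(1) by (simp add: sum.inter_filter)
      finally have p: "\<psi> x = sum (dj f) {u\<in>A. u < x}" .
      have sub: "{u\<in>A. u < x} \<subseteq> {0..<x}" using A(2) by auto
      have dx: "dj f summable_on {0..<x}"
        by (rule dj_summable_sub(1)[OF R B, of _ t]) (use x in auto)
      have "Jf f x - \<psi> x = infsum (dj f) ({0..<x} - {u\<in>A. u < x})"
        unfolding Jf_def p using infsum_diff_finite[OF dx _ sub] A(1) by simp
      also have "{0..<x} - {u\<in>A. u < x} = {0..<x} - A" by auto
      finally have "Jf f x - \<psi> x = infsum (dj f) ({0..<x} - A)" .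
      moreover have "\<bar>infsum (dj f) ({0..<x} - A)\<bar> \<le> \<tau>"
        unfolding \<tau>_def
        by (rule infsum_abs_le[OF summable_on_subset_banach[OF dS Diff_subset]]) (use x in auto)
      ultimately show ?thesis using \<tau>e by simp
    qed
    have intpsi: "(\<integral>x. indicator ?I x * \<psi> x \<partial>?M) = (\<Sum>u\<in>A. dj f u * (F t - F u))"
    proof -
      have ii: "integrable ?M (\<lambda>x. dj f u * indicator {u<..t} x)" if "u \<in> A" for u
      proof -
        have "u \<le> t" using that A(2) by auto
        then have "emeasure ?M {u<..t} = ennreal (F t - F u)" using im_Ioc(1)[OF gF] by simp
        then show ?thesis by (intro integrable_mult_right integrable_real_indicator) auto
      qed
      have pw: "indicator ?I x * \<psi> x = (\<Sum>u\<in>A. dj f u * indicator {u<..t} x)" for x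
      proof (cases "x \<in> ?I")
        case True
        then show ?thesis unfolding \<psi>_def by simp
      next
        case False
        then have "dj f u * indicator {u<..t} x = 0" if "u \<in> A" for u
          using that A(2) by (auto simp: indicator_def)
        then have "(\<Sum>u\<in>A. dj f u * indicator {u<..t} x) = 0" by (intro sum.neutral) auto
        then show ?thesis unfolding \<psi>_def using False by simp
      qed
      have "(\<integral>x. indicator ?I x * \<psi> x \<partial>?M) = (\<integral>x. (\<Sum>u\<in>A. dj f u * indicator {u<..t} x) \<partial>?M)"
        by (simp only: pw)
      also have "\<dots> = (\<Sum>u\<in>A. (\<integral>x. dj f u * indicator {u<..t} x \<partial>?M))"
        by (rule Bochner_Integration.integral_sum[where f="\<lambda>u x. dj f u * indicator {u<..t} x"]) (rule ii)
      also have "\<dots> = (\<Sum>u\<in>A. dj f u * (F t - F u))"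
      proof (intro sum.cong refl)
        fix u assume "u \<in> A"
        then have "u \<le> t" using A(2) by auto
        then show "(\<integral>x. dj f u * indicator {u<..t} x \<partial>?M) = dj f u * (F t - F u)"
          using im_Ioc(2)[OF gF] by simp
      qed
      finally show ?thesis .
    qed
    have "\<bar>(\<Sum>u\<in>A. dj f u * (F t - F u)) - infsum (\<lambda>u. dj f u * (F t - F u)) ?S\<bar>
        = \<bar>infsum (\<lambda>u. dj f u * (F t - F u)) (?S - A)\<bar>"
      using infsum_diff_finite[OF Tsum A(1,2)] by simp
    also have "\<dots> \<le> infsum (\<lambda>u. \<bar>dj f u * (F t - F u)\<bar>) (?S - A)"
      by (rule infsum_abs_le[OF summable_on_subset_banach[OF Tsum Diff_subset] order_refl])
    also have "\<dots> \<le> infsum (\<lambda>u. \<bar>dj f u\<bar> * C) (?S - A)"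
    proof (rule infsum_mono)
      show "(\<lambda>u. \<bar>dj f u * (F t - F u)\<bar>) summable_on ?S - A"
        using summable_on_subset_banach[OF Tabs Diff_subset] .
      show "(\<lambda>u. \<bar>dj f u\<bar> * C) summable_on ?S - A"
        using summable_on_cmult_left[OF abSA] .
      fix u assume "u \<in> ?S - A"
      then show "\<bar>dj f u * (F t - F u)\<bar> \<le> \<bar>dj f u\<bar> * C"
        using hF[of u] by (simp add: abs_mult mult_left_mono)
    qed
    also have "\<dots> = \<tau> * C" unfolding \<tau>_def using abSA by (intro infsum_cmult_left) auto
    also have "\<dots> \<le> \<epsilon> / (C + 1) * C" using \<tau> C0 by (intro mult_right_mono) auto
    also have "\<dots> \<le> \<epsilon>" using e C0 by (simp add: field_simps)
    finally have "\<bar>(\<integral>x. indicator ?I x * \<psi> x \<partial>?M) - infsum (\<lambda>u. dj f u * (F t - F u)) ?S\<bar> \<le> \<epsilon>"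
      unfolding intpsi .
    then show ?thesis using meas bnd close by blast
  qed
  show "integrable ?M (\<lambda>x. indicator ?I x * Jf f x)"
    "(\<integral>x. indicator ?I x * Jf f x \<partial>?M) = infsum (\<lambda>u. dj f u * (F t - F u)) ?S"
    using approx_integral[OF gF less_imp_le[OF t] main] by auto
qed

lemma fin_sq:
  fixes d :: "real \<Rightarrow> real" and A :: "real set"
  assumes "finite A"
  shows "(sum d A)\<^sup>2 = (\<Sum>u\<in>A. d u * (2 * sum d {v\<in>A. v < u} + d u))"
  using assms
proof (induction A rule: finite_linorder_max_induct)
  case empty
  show ?case by simp
next
  case (insert b A)
  have bA: "b \<notin> A" using insert(2) by auto
  have s1: "{v \<in> insert b A. v < b} = A" using insert(2) by auto
  have s2: "{v \<in> insert b A. v < u} = {v \<in> A. v < u}" if "u \<in> A" for u using insert(2) that by auto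
  have "(\<Sum>u\<in>insert b A. d u * (2 * sum d {v\<in>insert b A. v < u} + d u))
      = d b * (2 * sum d A + d b) + (\<Sum>u\<in>A. d u * (2 * sum d {v\<in>insert b A. v < u} + d u))"
    using insert(1) bA s1 by (simp add: sum.insert)
  also have "(\<Sum>u\<in>A. d u * (2 * sum d {v\<in>insert b A. v < u} + d u))
      = (\<Sum>u\<in>A. d u * (2 * sum d {v\<in>A. v < u} + d u))"
    by (rule sum.cong[OF refl]) (simp only: s2)
  also have "\<dots> = (sum d A)\<^sup>2" using insert(3) by simp
  finally have "(\<Sum>u\<in>insert b A. d u * (2 * sum d {v\<in>insert b A. v < u} + d u))
      = d b * (2 * sum d A + d b) + (sum d A)\<^sup>2" .
  moreover have "(sum d (insert b A))\<^sup>2 = (d b + sum d A)\<^sup>2" using insert(1) bA by simp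
  ultimately show ?case by (simp add: power2_eq_square algebra_simps)
qed

lemma J_square:
  assumes R: "regulated_path f" and B: "bv_path f" and t: "0 \<le> t"
  shows "(\<lambda>u. dj f u * (2 * Jf f u + dj f u)) summable_on {0..<t}"
    "(Jf f t)\<^sup>2 = infsum (\<lambda>u. dj f u * (2 * Jf f u + dj f u)) {0..<t}"
proof -
  let ?S = "{0..<t}" and ?d = "dj f"
  let ?Q = "\<lambda>u. dj f u * (2 * Jf f u + dj f u)"
  have dS: "?d summable_on ?S" using dj_summable[OF R B] .
  have abS: "(\<lambda>u. \<bar>?d u\<bar>) summable_on ?S" using dj_abs_summable[OF R B] .
  define K where "K = infsum (\<lambda>u. \<bar>?d u\<bar>) ?S"
  have K0: "0 \<le> K" unfolding K_def by (rule infsum_nonneg) simp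
  have Jb: "\<bar>Jf f u\<bar> \<le> K" if "u \<le> t" for u
    unfolding Jf_def K_def by (rule infsum_abs_le[OF dS]) (use that in auto)
  have db: "\<bar>?d u\<bar> \<le> K" if "u \<in> ?S" for u
    unfolding K_def using single_le_infsum[OF abS that] .
  have cb: "\<bar>2 * Jf f u + ?d u\<bar> \<le> 3 * K" if "u \<in> ?S" for u
    using Jb[of u] db[OF that] that by auto
  show Qs: "?Q summable_on ?S"
    using bounded_mult_summable(2)[OF dS cb] .
  have Qabs: "(\<lambda>u. \<bar>?Q u\<bar>) summable_on ?S"
    using Qs summable_on_iff_abs_summable_on_real[of ?Q ?S] by simp
  show "(Jf f t)\<^sup>2 = infsum ?Q ?S"
  proof (rule eq_by_eps[where K="7 * K"])
    fix \<epsilon> :: real assume e: "\<epsilon> > 0"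
    obtain A where A: "finite A" "A \<subseteq> ?S" "\<bar>infsum (\<lambda>u. \<bar>?d u\<bar>) (?S - A)\<bar> < \<epsilon>"
      using tail_small[OF abS e] by blast
    define \<tau> where "\<tau> = infsum (\<lambda>u. \<bar>?d u\<bar>) (?S - A)"
    have \<tau>: "0 \<le> \<tau>" "\<tau> \<le> \<epsilon>" unfolding \<tau>_def using A(3) by (auto intro: infsum_nonneg)
    have abSA: "(\<lambda>u. \<bar>?d u\<bar>) summable_on (?S - A)" using summable_on_subset_banach[OF abS Diff_subset] .
    have e1: "\<bar>Jf f t - sum ?d A\<bar> \<le> \<tau>"
    proof -
      have "Jf f t - sum ?d A = infsum ?d (?S - A)"
        unfolding Jf_def using infsum_diff_finite[OF dS A(1,2)] by simp
      moreover have "\<bar>infsum ?d (?S - A)\<bar> \<le> \<tau>"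
        unfolding \<tau>_def by (rule infsum_abs_le[OF summable_on_subset_banach[OF dS Diff_subset] order_refl])
      ultimately show ?thesis by simp
    qed
    have e2: "\<bar>sum ?d A\<bar> \<le> K" unfolding K_def by (rule sum_le_infsum_abs[OF abS A(1,2)])
    have e2': "\<bar>Jf f t\<bar> \<le> K" using Jb by simp
    have p1: "\<bar>(Jf f t)\<^sup>2 - (sum ?d A)\<^sup>2\<bar> \<le> 2 * K * \<tau>"
    proof -
      have "\<bar>(Jf f t)\<^sup>2 - (sum ?d A)\<^sup>2\<bar> = \<bar>Jf f t - sum ?d A\<bar> * \<bar>Jf f t + sum ?d A\<bar>"
        by (simp add: power2_eq_square abs_mult[symmetric] algebra_simps)
      also have "\<dots> \<le> \<tau> * (2 * K)"
        using e1 e2 e2' \<tau>(1) by (intro mult_mono) auto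
      finally show ?thesis by (simp add: algebra_simps)
    qed
    define JA where "JA u = sum ?d {v\<in>A. v < u}" for u
    have e3: "\<bar>Jf f u - JA u\<bar> \<le> \<tau>" if "u \<in> A" for u
    proof -
      have u: "u \<in> ?S" using that A(2) by auto
      have du: "?d summable_on {0..<u}" by (rule dj_summable_sub(1)[OF R B, of _ t]) (use u in auto)
      have sub: "{v\<in>A. v < u} \<subseteq> {0..<u}" using A(2) by auto
      have "Jf f u - JA u = infsum ?d ({0..<u} - {v\<in>A. v < u})"
        unfolding Jf_def JA_def using infsum_diff_finite[OF du _ sub] A(1) by simp
      also have "{0..<u} - {v\<in>A. v < u} = {0..<u} - A" by auto
      finally have "Jf f u - JA u = infsum ?d ({0..<u} - A)" .
      moreover have "\<bar>infsum ?d ({0..<u} - A)\<bar> \<le> \<tau>"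
        unfolding \<tau>_def
        by (rule infsum_abs_le[OF summable_on_subset_banach[OF dS Diff_subset]]) (use u in auto)
      ultimately show ?thesis by simp
    qed
    have sqA: "(sum ?d A)\<^sup>2 = (\<Sum>u\<in>A. ?d u * (2 * JA u + ?d u))"
      unfolding JA_def by (rule fin_sq[OF A(1)])
    have p2: "\<bar>(\<Sum>u\<in>A. ?Q u) - (sum ?d A)\<^sup>2\<bar> \<le> 2 * K * \<tau>"
    proof -
      have "(\<Sum>u\<in>A. ?Q u) - (sum ?d A)\<^sup>2 = (\<Sum>u\<in>A. 2 * ?d u * (Jf f u - JA u))"
        unfolding sqA by (simp add: sum_subtractf[symmetric] algebra_simps)
      also have "\<bar>\<dots>\<bar> \<le> (\<Sum>u\<in>A. \<bar>?d u\<bar> * (2 * \<tau>))"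
      proof (rule order_trans[OF sum_abs], rule sum_mono)
        fix u assume "u \<in> A"
        then show "\<bar>2 * ?d u * (Jf f u - JA u)\<bar> \<le> \<bar>?d u\<bar> * (2 * \<tau>)"
          using e3[of u] by (simp add: abs_mult mult_left_mono)
      qed
      also have "\<dots> = (2 * \<tau>) * (\<Sum>u\<in>A. \<bar>?d u\<bar>)" by (simp add: sum_distrib_left mult.commute)
      also have "\<dots> \<le> (2 * \<tau>) * K"
        using sum_le_infsum_abs[OF _ A(1,2), of "\<lambda>u. \<bar>?d u\<bar>"] abS \<tau>(1) unfolding K_def
        by (intro mult_left_mono) auto
      finally show ?thesis by (simp add: algebra_simps)
    qed
    have p3: "\<bar>infsum ?Q ?S - (\<Sum>u\<in>A. ?Q u)\<bar> \<le> 3 * K * \<tau>"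
    proof -
      have "\<bar>infsum ?Q ?S - (\<Sum>u\<in>A. ?Q u)\<bar> = \<bar>infsum ?Q (?S - A)\<bar>"
        using infsum_diff_finite[OF Qs A(1,2)] by simp
      also have "\<dots> \<le> infsum (\<lambda>u. \<bar>?Q u\<bar>) (?S - A)"
        by (rule infsum_abs_le[OF summable_on_subset_banach[OF Qs Diff_subset] order_refl])
      also have "\<dots> \<le> infsum (\<lambda>u. \<bar>?d u\<bar> * (3 * K)) (?S - A)"
      proof (rule infsum_mono)
        show "(\<lambda>u. \<bar>?Q u\<bar>) summable_on ?S - A" using summable_on_subset_banach[OF Qabs Diff_subset] .
        show "(\<lambda>u. \<bar>?d u\<bar> * (3 * K)) summable_on ?S - A" using summable_on_cmult_left[OF abSA] .
        fix u assume "u \<in> ?S - A"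
        then show "\<bar>?Q u\<bar> \<le> \<bar>?d u\<bar> * (3 * K)"
          using cb[of u] by (simp add: abs_mult mult_left_mono)
      qed
      also have "\<dots> = \<tau> * (3 * K)" unfolding \<tau>_def using abSA by (intro infsum_cmult_left) auto
      finally show ?thesis by (simp add: algebra_simps)
    qed
    have "\<bar>(Jf f t)\<^sup>2 - infsum ?Q ?S\<bar> \<le> 7 * K * \<tau>" using p1 p2 p3 by linarith
    also have "\<dots> \<le> 7 * K * \<epsilon>" using \<tau> K0 by (intro mult_left_mono) auto
    finally show "\<bar>(Jf f t)\<^sup>2 - infsum ?Q ?S\<bar> \<le> 7 * K * \<epsilon>" .
  qed (use K0 in simp)
qed

lemma atoms_diff:
  assumes R: "regulated_path f" and B: "bv_path f" and gV: "goodF V" and gW: "goodF W"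
    and diff: "\<And>a b. 0 \<le> a \<Longrightarrow> a \<le> b \<Longrightarrow> (V b - V a) - (W b - W a) = right_cont_part f b - right_cont_part f a"
    and s: "0 < s"
  shows "measure (interval_measure V) {s} - measure (interval_measure W) {s} = f s - left_lim f s"
proof -
  let ?g = "right_cont_part f"
  let ?y = "\<lambda>n. s - inverse (real (Suc n))"
  have L: "(\<lambda>n. (V s - V (?y n)) - (W s - W (?y n))) \<longlonglongrightarrow>
      measure (interval_measure V) {s} - measure (interval_measure W) {s}"
    by (intro tendsto_diff atom_limit gV gW)
  have ylim: "?y \<longlonglongrightarrow> s"
    using tendsto_diff[OF tendsto_const LIMSEQ_inverse_real_of_nat, of s] by simp
  have "filterlim ?y (at_left s) sequentially"
    by (rule tendsto_imp_filterlim_at_left[OF ylim]) (intro always_eventually allI, simp)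
  from filterlim_compose[OF g_left_lim[OF R B s] this]
  have gl: "(\<lambda>n. ?g (?y n)) \<longlonglongrightarrow> left_lim f s - Jf f s" .
  have ev: "eventually (\<lambda>n. inverse (real (Suc n)) < s) sequentially"
    using order_tendstoD(2)[OF LIMSEQ_inverse_real_of_nat s] .
  have ev2: "eventually (\<lambda>n. ?g s - ?g (?y n) = (V s - V (?y n)) - (W s - W (?y n))) sequentially"
    using ev by eventually_elim (rule diff[symmetric], auto)
  have "(\<lambda>n. ?g s - ?g (?y n)) \<longlonglongrightarrow> ?g s - (left_lim f s - Jf f s)"
    by (intro tendsto_diff tendsto_const gl)
  then have "(\<lambda>n. (V s - V (?y n)) - (W s - W (?y n))) \<longlonglongrightarrow> ?g s - (left_lim f s - Jf f s)"
    using iffD1[OF tendsto_cong[OF ev2]] by blast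
  then have "measure (interval_measure V) {s} - measure (interval_measure W) {s} = ?g s - (left_lim f s - Jf f s)"
    using LIMSEQ_unique[OF L] by blast
  then show ?thesis unfolding rcp_eq by simp
qed

lemma main_pos:
  assumes R: "regulated_path f" and B: "bv_path f" and t: "t > 0"
  shows "(f t)\<^sup>2 \<le> (f 0)\<^sup>2 + stieltjes_Ioc (right_cont_part f) (\<lambda>s. f s + right_lim f s) 0 t
           + 2 * infsum (\<lambda>s. right_lim f s * (right_lim f s - f s)) {0..<t}
           - infsum (\<lambda>s. (right_lim f s - f s) * (f s - left_lim f s)) {0<..t}"
proof -
  define g where "g = right_cont_part f"
  define V where "V = Vg g"
  define W where "W = Wg g"
  let ?I = "{0<..t}" and ?S = "{0..<t}"
  let ?M1 = "interval_measure V" and ?M2 = "interval_measure W"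
  define d where "d = dj f"
  define e where "e s = f s - left_lim f s" for s
  define J where "J = Jf f"
  define gl where "gl s = left_lim f s - Jf f s" for s
  have gJ: "g s = f s - J s" for s unfolding g_def J_def rcp_eq ..
  have gB: "bv_path g" unfolding g_def using g_bv_path[OF R B] .
  have grc: "\<And>s. 0 \<le> s \<Longrightarrow> (g \<longlongrightarrow> g s) (at_right s)" unfolding g_def using g_right_cont[OF R B] .
  have gV: "goodF V" unfolding goodF_def V_def using Vg_mono[OF gB] Vg_right_cont[OF gB grc] by blast
  have gW: "goodF W" unfolding goodF_def W_def using Wg_mono[OF gB] Wg_right_cont[OF gB grc] by blast
  have diff: "(V b - V a) - (W b - W a) = g b - g a" if "0 \<le> a" "a \<le> b" for a b
    unfolding V_def W_def using Vg_Wg_diff[OF that] .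
  define Gb where "Gb = \<bar>g 0\<bar> + variation g 0 t"
  have gbd: "\<bar>g x\<bar> \<le> Gb" if "0 \<le> x" "x \<le> t" for x
  proof -
    have "\<bar>g x - g 0\<bar> \<le> variation g 0 x" using bv_ge[OF bvp[OF gB that(1)]] .
    moreover have "variation g x t \<le> variation g 0 t - variation g 0 x" using var_diff[OF gB that] .
    moreover have "0 \<le> variation g x t" using bv_nonneg[OF bv_sub[OF gB that]] .
    ultimately show ?thesis unfolding Gb_def by linarith
  qed
  have lc: "(g \<longlongrightarrow> gl s) (at_left s)" if "0 < s" "s \<le> t" for s
    unfolding g_def gl_def using g_left_lim[OF R B that(1)] .
  have diff': "(V b - V a) - (W b - W a) = g b - g a" if "0 \<le> a" "a \<le> b" "b \<le> t" for a b
    using diff that by blast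
  have grc': "(g \<longlongrightarrow> g s) (at_right s)" if "0 \<le> s" "s < t" for s using grc that by blast
  have SC: "integrable ?M1 (\<lambda>x. indicator ?I x * g x)" "integrable ?M2 (\<lambda>x. indicator ?I x * g x)"
    "integrable ?M1 (\<lambda>x. indicator ?I x * gl x)" "integrable ?M2 (\<lambda>x. indicator ?I x * gl x)"
    "((\<integral>x. indicator ?I x * g x \<partial>?M1) - (\<integral>x. indicator ?I x * g x \<partial>?M2))
     + ((\<integral>x. indicator ?I x * gl x \<partial>?M1) - (\<integral>x. indicator ?I x * gl x \<partial>?M2))
     = (g t)\<^sup>2 - (g 0)\<^sup>2"
    by (rule step_conv[OF gV gW t]; (fact diff' gbd grc' lc)?)+
  have atoms: "measure ?M1 {s} - measure ?M2 {s} = e s" if "s \<in> ?I" for s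
    unfolding e_def
    by (rule atoms_diff[OF R B gV gW]) (use diff that in \<open>auto simp: g_def\<close>)
  have eS: "e summable_on ?I"
    using ej_abs_summable[OF R B, of t] summable_on_iff_abs_summable_on_real[of e ?I] unfolding e_def by simp
  note AE1 = atom_integral[OF gV less_imp_le[OF t] eS] and AE2 = atom_integral[OF gW less_imp_le[OF t] eS]
  have Ae: "(\<integral>x. indicator ?I x * e x \<partial>?M1) - (\<integral>x. indicator ?I x * e x \<partial>?M2) = infsum (\<lambda>s. e s * e s) ?I"
  proof -
    have "(\<integral>x. indicator ?I x * e x \<partial>?M1) - (\<integral>x. indicator ?I x * e x \<partial>?M2)
        = infsum (\<lambda>s. e s * measure ?M1 {s} - e s * measure ?M2 {s}) ?I"
      using AE1(3) AE2(3) infsum_diff2[OF AE1(2) AE2(2)] by simp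
    also have "\<dots> = infsum (\<lambda>s. e s * e s) ?I"
      by (intro infsum_cong) (simp add: atoms right_diff_distrib[symmetric])
    finally show ?thesis .
  qed
  have Ae0: "0 \<le> infsum (\<lambda>s. e s * e s) ?I" by (intro infsum_nonneg) simp
  have gle: "indicator ?I x * g x - indicator ?I x * gl x = indicator ?I x * e x" for x
    by (cases "x \<in> ?I") (auto simp: gJ gl_def e_def J_def)
  have Agl: "((\<integral>x. indicator ?I x * g x \<partial>?M1) - (\<integral>x. indicator ?I x * g x \<partial>?M2))
      - ((\<integral>x. indicator ?I x * gl x \<partial>?M1) - (\<integral>x. indicator ?I x * gl x \<partial>?M2))
      = infsum (\<lambda>s. e s * e s) ?I"
  proof -
    have "(\<integral>x. indicator ?I x * g x \<partial>?M1) - (\<integral>x. indicator ?I x * gl x \<partial>?M1) = (\<integral>x. indicator ?I x * e x \<partial>?M1)"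
      using SC(1,3) by (simp add: gle[symmetric])
    moreover have "(\<integral>x. indicator ?I x * g x \<partial>?M2) - (\<integral>x. indicator ?I x * gl x \<partial>?M2) = (\<integral>x. indicator ?I x * e x \<partial>?M2)"
      using SC(2,4) by (simp add: gle[symmetric])
    ultimately show ?thesis using Ae by linarith
  qed
  have A1: "2 * ((\<integral>x. indicator ?I x * g x \<partial>?M1) - (\<integral>x. indicator ?I x * g x \<partial>?M2)) \<ge> (g t)\<^sup>2 - (g 0)\<^sup>2"
  proof -
    have key: "\<And>a b X E::real. a + b = X \<Longrightarrow> a - b = E \<Longrightarrow> 0 \<le> E \<Longrightarrow> X \<le> 2 * a" by linarith
    show ?thesis using key[OF SC(5) Agl Ae0] .
  qed
  have dI: "d summable_on ?I"
    unfolding d_def by (rule dj_summable_sub(1)[OF R B, of _ "t + 1"]) auto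
  note AD1 = atom_integral[OF gV less_imp_le[OF t] dI] and AD2 = atom_integral[OF gW less_imp_le[OF t] dI]
  have Ad: "(\<integral>x. indicator ?I x * d x \<partial>?M1) - (\<integral>x. indicator ?I x * d x \<partial>?M2) = infsum (\<lambda>s. d s * e s) ?I"
  proof -
    have "(\<integral>x. indicator ?I x * d x \<partial>?M1) - (\<integral>x. indicator ?I x * d x \<partial>?M2)
        = infsum (\<lambda>s. d s * measure ?M1 {s} - d s * measure ?M2 {s}) ?I"
      using AD1(3) AD2(3) infsum_diff2[OF AD1(2) AD2(2)] by simp
    also have "\<dots> = infsum (\<lambda>s. d s * e s) ?I"
      by (intro infsum_cong) (simp add: atoms right_diff_distrib[symmetric])
    finally show ?thesis .
  qed
  note JI1 = J_integral[OF R B gV t] and JI2 = J_integral[OF R B gW t]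
  have dS: "d summable_on ?S" unfolding d_def using dj_summable[OF R B] .
  have abS: "(\<lambda>u. \<bar>d u\<bar>) summable_on ?S" unfolding d_def using dj_abs_summable[OF R B] .
  define K where "K = infsum (\<lambda>u. \<bar>d u\<bar>) ?S"
  have Jb: "\<bar>J u\<bar> \<le> K" if "u \<le> t" for u
    unfolding J_def Jf_def K_def d_def[symmetric] by (rule infsum_abs_le[OF dS]) (use that in auto)
  have db: "\<bar>d u\<bar> \<le> K" if "u \<in> ?S" for u
    unfolding K_def using single_le_infsum[OF abS that] .
  have Vt: "\<bar>V t - V u\<bar> \<le> V t - V 0" "\<bar>W t - W u\<bar> \<le> W t - W 0" if "u \<in> ?S" for u
    using gV gW that unfolding goodF_def by (auto simp: abs_le_iff)
  have sV: "(\<lambda>u. d u * (V t - V u)) summable_on ?S"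
    using bounded_mult_summable(2)[OF dS Vt(1)] .
  have sW: "(\<lambda>u. d u * (W t - W u)) summable_on ?S"
    using bounded_mult_summable(2)[OF dS Vt(2)] .
  have AJ: "(\<integral>x. indicator ?I x * J x \<partial>?M1) - (\<integral>x. indicator ?I x * J x \<partial>?M2)
      = infsum (\<lambda>u. d u * (g t - g u)) ?S"
  proof -
    have "(\<integral>x. indicator ?I x * J x \<partial>?M1) - (\<integral>x. indicator ?I x * J x \<partial>?M2)
        = infsum (\<lambda>u. d u * (V t - V u) - d u * (W t - W u)) ?S"
      using JI1(2) JI2(2) infsum_diff2[OF sV sW] unfolding J_def d_def by simp
    also have "\<dots> = infsum (\<lambda>u. d u * (g t - g u)) ?S"
      by (intro infsum_cong) (simp add: diff right_diff_distrib[symmetric] less_imp_le)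
    finally show ?thesis .
  qed
  have hpt: "indicator ?I x * (f x + right_lim f x)
      = 2 * (indicator ?I x * g x) + 2 * (indicator ?I x * J x) + indicator ?I x * d x" for x
    unfolding d_def dj_def gJ by (simp add: algebra_simps)
  have intI: "(\<integral>x\<in>?I. f x + right_lim f x \<partial>M) =
      2 * (\<integral>x. indicator ?I x * g x \<partial>M) + 2 * (\<integral>x. indicator ?I x * J x \<partial>M) + (\<integral>x. indicator ?I x * d x \<partial>M)"
    if "integrable M (\<lambda>x. indicator ?I x * g x)" "integrable M (\<lambda>x. indicator ?I x * J x)"
      "integrable M (\<lambda>x. indicator ?I x * d x)" for M
  proof -
    have "(\<integral>x\<in>?I. f x + right_lim f x \<partial>M) = (\<integral>x. indicator ?I x * (f x + right_lim f x) \<partial>M)"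
      unfolding set_lebesgue_integral_def by simp
    also have "\<dots> = (\<integral>x. 2 * (indicator ?I x * g x) + 2 * (indicator ?I x * J x) + indicator ?I x * d x \<partial>M)"
      by (simp only: hpt)
    also have "\<dots> = 2 * (\<integral>x. indicator ?I x * g x \<partial>M) + 2 * (\<integral>x. indicator ?I x * J x \<partial>M) + (\<integral>x. indicator ?I x * d x \<partial>M)"
      using that by simp
    finally show ?thesis .
  qed
  have ST: "stieltjes_Ioc (right_cont_part f) (\<lambda>s. f s + right_lim f s) 0 t =
      2 * ((\<integral>x. indicator ?I x * g x \<partial>?M1) - (\<integral>x. indicator ?I x * g x \<partial>?M2))
      + 2 * infsum (\<lambda>u. d u * (g t - g u)) ?S + infsum (\<lambda>s. d s * e s) ?I"
  proof -
    have "stieltjes_Ioc (right_cont_part f) (\<lambda>s. f s + right_lim f s) 0 t =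
        (\<integral>x\<in>?I. f x + right_lim f x \<partial>?M1) - (\<integral>x\<in>?I. f x + right_lim f x \<partial>?M2)"
      unfolding stieltjes_eq g_def[symmetric] V_def[symmetric] W_def[symmetric] ..
    also have "\<dots> = 2 * ((\<integral>x. indicator ?I x * g x \<partial>?M1) - (\<integral>x. indicator ?I x * g x \<partial>?M2))
      + 2 * ((\<integral>x. indicator ?I x * J x \<partial>?M1) - (\<integral>x. indicator ?I x * J x \<partial>?M2))
      + ((\<integral>x. indicator ?I x * d x \<partial>?M1) - (\<integral>x. indicator ?I x * d x \<partial>?M2))"
      using intI[OF SC(1) JI1(1)[folded J_def] AD1(1)] intI[OF SC(2) JI2(1)[folded J_def] AD2(1)]
      by (simp add: algebra_simps)
    finally show ?thesis unfolding AJ Ad .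
  qed
  have sq: "(J t)\<^sup>2 = infsum (\<lambda>u. d u * (2 * J u + d u)) ?S"
    unfolding J_def d_def using J_square(2)[OF R B less_imp_le[OF t]] .
  have Jb': "\<bar>J u\<bar> \<le> K" if "u \<in> ?S" for u using Jb that by auto
  have gb': "\<bar>g u\<bar> \<le> Gb" if "u \<in> ?S" for u using gbd that by auto
  have s_dg: "(\<lambda>u. d u * g u) summable_on ?S" using bounded_mult_summable(2)[OF dS gb'] .
  have s_dJ: "(\<lambda>u. d u * J u) summable_on ?S" using bounded_mult_summable(2)[OF dS Jb'] .
  have s_dd: "(\<lambda>u. d u * d u) summable_on ?S" using bounded_mult_summable(2)[OF dS db] .
  have s_dgt: "(\<lambda>u. d u * g t) summable_on ?S" using summable_on_cmult_left[OF dS] .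
  have P1: "infsum (\<lambda>u. d u * (g t - g u)) ?S = g t * J t - infsum (\<lambda>u. d u * g u) ?S"
  proof -
    have "infsum (\<lambda>u. d u * (g t - g u)) ?S = infsum (\<lambda>u. d u * g t - d u * g u) ?S"
      by (simp add: right_diff_distrib)
    also have "\<dots> = infsum (\<lambda>u. d u * g t) ?S - infsum (\<lambda>u. d u * g u) ?S"
      by (rule infsum_diff2[OF s_dgt s_dg])
    also have "infsum (\<lambda>u. d u * g t) ?S = J t * g t"
      unfolding J_def Jf_def d_def by (rule infsum_cmult_left) (use dj_summable[OF R B] in simp)
    finally show ?thesis by simp
  qed
  have P2: "infsum (\<lambda>s. right_lim f s * (right_lim f s - f s)) ?S
      = infsum (\<lambda>u. d u * g u) ?S + infsum (\<lambda>u. d u * J u) ?S + infsum (\<lambda>u. d u * d u) ?S"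
  proof -
    have "infsum (\<lambda>s. right_lim f s * (right_lim f s - f s)) ?S
        = infsum (\<lambda>u. d u * g u + d u * J u + d u * d u) ?S"
      by (intro infsum_cong) (simp add: d_def dj_def gJ algebra_simps)
    also have "\<dots> = infsum (\<lambda>u. d u * g u + d u * J u) ?S + infsum (\<lambda>u. d u * d u) ?S"
      by (rule infsum_add[OF summable_on_add[OF s_dg s_dJ] s_dd])
    also have "infsum (\<lambda>u. d u * g u + d u * J u) ?S = infsum (\<lambda>u. d u * g u) ?S + infsum (\<lambda>u. d u * J u) ?S"
      by (rule infsum_add[OF s_dg s_dJ])
    finally show ?thesis .
  qed
  have P3: "infsum (\<lambda>u. d u * (2 * J u + d u)) ?S = 2 * infsum (\<lambda>u. d u * J u) ?S + infsum (\<lambda>u. d u * d u) ?S"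
  proof -
    have "infsum (\<lambda>u. d u * (2 * J u + d u)) ?S = infsum (\<lambda>u. 2 * (d u * J u) + d u * d u) ?S"
      by (simp add: algebra_simps)
    also have "\<dots> = infsum (\<lambda>u. 2 * (d u * J u)) ?S + infsum (\<lambda>u. d u * d u) ?S"
      by (rule infsum_add[OF summable_on_cmult_right[OF s_dJ] s_dd])
    also have "infsum (\<lambda>u. 2 * (d u * J u)) ?S = 2 * infsum (\<lambda>u. d u * J u) ?S"
      by (rule infsum_cmult_right) (use s_dJ in simp)
    finally show ?thesis .
  qed
  have dd0: "0 \<le> infsum (\<lambda>u. d u * d u) ?S" by (intro infsum_nonneg) simp
  have f0: "f 0 = g 0" unfolding gJ J_def Jf_def by simp
  have ft: "f t = g t + J t" unfolding gJ by simp
  have last: "infsum (\<lambda>s. (right_lim f s - f s) * (f s - left_lim f s)) ?I = infsum (\<lambda>s. d s * e s) ?I"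
    unfolding d_def dj_def e_def ..
  show ?thesis
    unfolding ST last P2 f0 ft
    using A1 P1 P3 sq dd0 by (simp add: power2_eq_square algebra_simps)
qed

theorem proposition6:
  fixes A :: "'w \<Rightarrow> real \<Rightarrow> real" and \<omega> :: 'w and t :: real
  assumes "\<forall>\<omega>. regulated_path (A \<omega>)"
    and "\<forall>\<omega>. bv_path (A \<omega>)"
    and "t \<ge> 0"
  shows "(A \<omega> t)\<^sup>2 \<le> (A \<omega> 0)\<^sup>2
           + stieltjes_Ioc (right_cont_part (A \<omega>)) (\<lambda>s. A \<omega> s + right_lim (A \<omega>) s) 0 t
           + 2 * infsum (\<lambda>s. right_lim (A \<omega>) s * (right_lim (A \<omega>) s - A \<omega> s)) {0..<t}
           - infsum (\<lambda>s. (right_lim (A \<omega>) s - A \<omega> s) * (A \<omega> s - left_lim (A \<omega>) s)) {0<..t}"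
proof (cases "t = 0")
  case True
  then show ?thesis unfolding stieltjes_Ioc_def Let_def set_lebesgue_integral_def by simp
next
  case False
  then have "t > 0" using assms(3) by simp
  moreover have "regulated_path (A \<omega>)" "bv_path (A \<omega>)" using assms(1,2) by blast+
  ultimately show ?thesis using main_pos by blast
qed

end
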